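(* Let $K>0$ and $r\in\{2,\infty\}$. Let $Z_1,\dots,Z_n$ be i.i.d. $\mathrm N_k(0,D)$ random vectors with $\max\{\|D^{-1}\|_{(r,r)},\|D\|_{(r,r)}\}\le K$, and let $S_n=n^{-1}\sum_{i=1}^nZ_iZ_i^T$. Then for every $M>K$ there exist constants $M',m>0$ depending only on $M$ and $K$ such that for all $n,k$, $$\mathrm P\big[\|S_n^{-1}\|_{(r,r)}\ge M\big]\le M'k^2\exp(-mnk^{-2}),$$ where the event includes the case that $S_n$ is singular.
   Context: For a $k\times k$ matrix $A$, $\|A\|_{(r,r)}=\sup\{\|Ax\|_r:\|x\|_r=1\}$; so $\|A\|_{(\infty,\infty)}=\max_i\sum_j|a_{ij}|$ and $\|A\|_{(2,2)}$ is the spectral norm. *)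

theory Defs
  imports "HOL-Probability.Probability" "Jordan_Normal_Form.Gauss_Jordan_Elimination" "Jordan_Normal_Form.Determinant"
begin

definition vnorm :: "ereal \<Rightarrow> real vec \<Rightarrow> real" where
  "vnorm r x = (if r = \<infinity> then Max (insert 0 {\<bar>x $ i\<bar> | i. i < dim_vec x})
               else (\<Sum>i<dim_vec x. \<bar>x $ i\<bar> powr real_of_ereal r) powr (1 / real_of_ereal r))"

definition opnorm :: "ereal \<Rightarrow> real mat \<Rightarrow> real" where
  "opnorm r A = Sup {vnorm r (A *\<^sub>v x) | x. x \<in> carrier_vec (dim_col A) \<and> vnorm r x = 1}"

definition sym_posdef :: "nat \<Rightarrow> real mat \<Rightarrow> bool" where
  "sym_posdef k D \<longleftrightarrow> D \<in> carrier_mat k k \<and> transpose_mat D = D \<and>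
     (\<forall>x \<in> carrier_vec k. x \<noteq> 0\<^sub>v k \<longrightarrow> (\<Sum>i<k. \<Sum>j<k. x $ i * D $$ (i, j) * x $ j) > 0)"

text \<open>The k-variate normal distribution N_k(0,D) (D positive definite), as a measure on
  nat \<Rightarrow> real (coordinates 0..<k), given by its Lebesgue density.\<close>
definition mvnormal :: "nat \<Rightarrow> real mat \<Rightarrow> (nat \<Rightarrow> real) measure" where
  "mvnormal k D = density (PiM {..<k} (\<lambda>_. lborel))
     (\<lambda>x. ennreal (exp (- (1/2) * (\<Sum>i<k. \<Sum>j<k. x i * the (mat_inverse D) $$ (i, j) * x j))
                   / sqrt ((2 * pi) ^ k * Determinant.det D)))"

text \<open>Sample covariance S_n = n^{-1} \<Sum>_{i<n} Z_i Z_i^T, where Z_i = w i.\<close>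
definition sample_cov :: "nat \<Rightarrow> nat \<Rightarrow> (nat \<Rightarrow> nat \<Rightarrow> real) \<Rightarrow> real mat" where
  "sample_cov n k w = Matrix.mat k k (\<lambda>(a, b). (1 / real n) * (\<Sum>i<n. w i a * w i b))"

definition iid_mvnormal :: "nat \<Rightarrow> nat \<Rightarrow> real mat \<Rightarrow> (nat \<Rightarrow> nat \<Rightarrow> real) measure" where
  "iid_mvnormal n k D = PiM {..<n} (\<lambda>_. mvnormal k D)"

definition bad_event :: "ereal \<Rightarrow> real \<Rightarrow> nat \<Rightarrow> nat \<Rightarrow> (nat \<Rightarrow> nat \<Rightarrow> real) set" where
  "bad_event r M n k = {w. case mat_inverse (sample_cov n k w) of
                            None \<Rightarrow> True | Some Sinv \<Rightarrow> opnorm r Sinv \<ge> M}"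

end

theory Submission
  imports Defs
begin

definition schur :: "nat \<Rightarrow> real mat \<Rightarrow> real mat" where
  "schur k A = mat k k (\<lambda>(i,j). A$$(i,j) - A$$(i,k)*A$$(k,j)/A$$(k,k))"

lemma schur_det:
  fixes A :: "real mat"
  assumes A: "A \<in> carrier_mat (Suc k) (Suc k)" and a: "A$$(k,k) \<noteq> 0"
  shows "det A = A$$(k,k) * det (schur k A)"
proof -
  define a where "a = A$$(k,k)"
  define L where "L = mat (Suc k) (Suc k) (\<lambda>(i,j). if i = j then 1 else if j = k then - A$$(i,k)/a else (0::real))"
  have L: "L \<in> carrier_mat (Suc k) (Suc k)" unfolding L_def by simp
  have "upper_triangular L" unfolding L_def upper_triangular_def by auto
  hence "det L = prod_list (diag_mat L)" using det_upper_triangular L by blast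
  also have "diag_mat L = map (\<lambda>_. 1) [0..<Suc k]" unfolding diag_mat_def L_def by auto
  also have "prod_list (map (\<lambda>_. 1::real) [0..<Suc k]) = 1" by (induct k) auto
  finally have dL: "det L = 1" .
  define B where "B = L * A"
  have B: "B \<in> carrier_mat (Suc k) (Suc k)" unfolding B_def using L A by auto
  have Bij: "B$$(i,j) = (if i = k then A$$(i,j) else A$$(i,j) - A$$(i,k)*A$$(k,j)/a)"
    if "i < Suc k" "j < Suc k" for i j
  proof -
    have "B$$(i,j) = (\<Sum>l<Suc k. L$$(i,l) * A$$(l,j))"
      unfolding B_def using that L A
      by (auto simp: scalar_prod_def atLeast0LessThan intro!: sum.cong)
    also have "\<dots> = (\<Sum>l<Suc k. (if l = i then A$$(l,j) else 0) +
        (if l = k \<and> i \<noteq> k then - A$$(i,k)/a * A$$(l,j) else 0))"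
      using that unfolding L_def by (intro sum.cong) auto
    also have "\<dots> = (if i = k then A$$(i,j) else A$$(i,j) - A$$(i,k)*A$$(k,j)/a)"
      using that by (simp add: sum.distrib)
    finally show ?thesis .
  qed
  have "det B = det L * det A" unfolding B_def using det_mult L A by blast
  hence dB: "det B = det A" using dL by simp
  have "det B = (\<Sum>i<Suc k. B$$(i,k) * cofactor B i k)"
    using laplace_expansion_column[OF B] by simp
  also have "\<dots> = (\<Sum>i<Suc k. if i = k then a * cofactor B k k else 0)"
    by (intro sum.cong) (auto simp: Bij a_def a)
  also have "\<dots> = a * cofactor B k k" by simp
  also have "cofactor B k k = det (mat_delete B k k)" unfolding cofactor_def by simp
  also have "mat_delete B k k = schur k A"
    unfolding mat_delete_def schur_def using B
    by (intro eq_matI) (auto simp: Bij a_def)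
  finally show ?thesis using dB a_def by simp
qed


definition qf :: "nat \<Rightarrow> real mat \<Rightarrow> (nat \<Rightarrow> real) \<Rightarrow> real" where
  "qf k A x = (\<Sum>i<k. \<Sum>j<k. x i * A$$(i,j) * x j)"

lemma psf_lborel: "product_sigma_finite (\<lambda>_. lborel :: real measure)"
  by (simp add: product_sigma_finite_def lborel.sigma_finite_measure_axioms)

lemma qf_measurable[measurable]: "(\<lambda>x. qf k A x) \<in> borel_measurable (PiM I (\<lambda>_. lborel))"
  if "{..<k} \<subseteq> I"
  unfolding qf_def using that
  by (auto intro!: borel_measurable_sum borel_measurable_times measurable_component_singleton)

lemma gauss_1d:
  fixes a s :: real assumes a: "a > 0"
  shows "(\<integral>\<^sup>+t. ennreal (exp (- (a * (t + s)\<^sup>2) / 2)) \<partial>lborel) = ennreal (sqrt (2*pi/a))"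
proof -
  define \<sigma> where "\<sigma> = 1 / sqrt a"
  have \<sigma>: "\<sigma> > 0" using a by (simp add: \<sigma>_def)
  have eq: "normal_density (-s) \<sigma> t = sqrt (a/(2*pi)) * exp (- (a * (t + s)\<^sup>2) / 2)" for t
    unfolding normal_density_def \<sigma>_def using a
    by (simp add: power_divide real_sqrt_divide field_simps)
  have "1 = (\<integral>\<^sup>+t. ennreal (normal_density (-s) \<sigma> t) \<partial>lborel)"
    using prob_space.emeasure_space_1[OF prob_space_normal_density[OF \<sigma>, of "-s"]]
    by (simp add: emeasure_density)
  also have "\<dots> = (\<integral>\<^sup>+t. ennreal (sqrt (a/(2*pi))) * ennreal (exp (- (a * (t + s)\<^sup>2) / 2)) \<partial>lborel)"
  proof (intro nn_integral_cong)
    fix t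
    have "0 \<le> sqrt (a/(2*pi))" using a by simp
    then show "ennreal (normal_density (-s) \<sigma> t) = ennreal (sqrt (a/(2*pi))) * ennreal (exp (- (a * (t + s)\<^sup>2) / 2))"
      unfolding eq by (simp add: ennreal_mult)
  qed
  also have "\<dots> = ennreal (sqrt (a/(2*pi))) * (\<integral>\<^sup>+t. ennreal (exp (- (a * (t + s)\<^sup>2) / 2)) \<partial>lborel)"
    by (rule nn_integral_cmult) simp
  finally have 1: "ennreal (sqrt (a/(2*pi))) * (\<integral>\<^sup>+t. ennreal (exp (- (a * (t + s)\<^sup>2) / 2)) \<partial>lborel) = 1" by simp
  define I where "I = (\<integral>\<^sup>+t. ennreal (exp (- (a * (t + s)\<^sup>2) / 2)) \<partial>lborel)"
  have 2: "ennreal (sqrt (2*pi/a)) * ennreal (sqrt (a/(2*pi))) = 1"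
    using a by (simp add: ennreal_mult[symmetric] real_sqrt_mult[symmetric])
  have "I = (ennreal (sqrt (2*pi/a)) * ennreal (sqrt (a/(2*pi)))) * I" unfolding 2 by simp
  also have "\<dots> = ennreal (sqrt (2*pi/a)) * (ennreal (sqrt (a/(2*pi))) * I)" by (simp add: mult.assoc)
  also have "\<dots> = ennreal (sqrt (2*pi/a))" using 1 unfolding I_def by simp
  finally show ?thesis unfolding I_def .
qed


lemma qf_split:
  fixes A :: "real mat"
  assumes sym: "\<And>i j. i<Suc k \<Longrightarrow> j<Suc k \<Longrightarrow> A$$(i,j) = A$$(j,i)" and a: "A$$(k,k) \<noteq> 0"
  shows "qf (Suc k) A (x(k:=t)) = qf k (schur k A) x + A$$(k,k) * (t + (\<Sum>j<k. A$$(k,j) * x j)/A$$(k,k))\<^sup>2"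
proof -
  define a where "a = A$$(k,k)"
  define p where "p = (\<Sum>j<k. A$$(k,j) * x j)"
  define S where "S = (\<Sum>i<k. \<Sum>j<k. x i * A$$(i,j) * x j)"
  have p2: "(\<Sum>i<k. x i * A$$(i,k)) = p" unfolding p_def
    by (intro sum.cong) (auto simp: sym)
  have "qf (Suc k) A (x(k:=t)) = (\<Sum>i<Suc k. (\<Sum>j<k. (x(k:=t)) i * A$$(i,j) * x j) + (x(k:=t)) i * A$$(i,k) * t)"
    unfolding qf_def by (intro sum.cong) auto
  also have "\<dots> = S + (\<Sum>i<k. x i * A$$(i,k) * t) + (\<Sum>j<k. t * A$$(k,j) * x j) + t * a * t"
    unfolding S_def a_def by (simp add: sum.distrib)
  also have "(\<Sum>i<k. x i * A$$(i,k) * t) = p * t" unfolding p2[symmetric] by (simp add: sum_distrib_right)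
  also have "(\<Sum>j<k. t * A$$(k,j) * x j) = t * p" unfolding p_def by (simp add: sum_distrib_left mult.assoc)
  finally have L: "qf (Suc k) A (x(k:=t)) = S + 2 * t * p + a * t\<^sup>2" by (simp add: power2_eq_square algebra_simps fun_upd_def)
  have "qf k (schur k A) x = (\<Sum>i<k. \<Sum>j<k. x i * A$$(i,j) * x j - (x i * A$$(i,k)) * (A$$(k,j) * x j) / a)"
    unfolding qf_def schur_def a_def by (intro sum.cong) (auto simp: algebra_simps)
  also have "\<dots> = S - (\<Sum>i<k. \<Sum>j<k. (x i * A$$(i,k)) * (A$$(k,j) * x j)) / a"
    unfolding S_def by (simp add: sum_subtractf sum_divide_distrib)
  also have "(\<Sum>i<k. \<Sum>j<k. (x i * A$$(i,k)) * (A$$(k,j) * x j)) = (\<Sum>i<k. x i * A$$(i,k)) * p"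
    unfolding p_def by (simp add: sum_product)
  also have "\<dots> = p * p" using p2 by simp
  finally have R: "qf k (schur k A) x = S - p * p / a" .
  show ?thesis unfolding L R p_def[symmetric] a_def[symmetric] using a unfolding a_def[symmetric]
    by (simp add: power2_eq_square field_simps)
qed

lemma det_0_mat: "A \<in> carrier_mat 0 0 \<Longrightarrow> det A = (1::real)"
  using det_upper_triangular[of A 0] by (simp add: upper_triangular_def diag_mat_def)

lemma exp_split: "exp (- ((Q::real) + z)/2) = exp (-Q/2) * exp (-z/2)"
  by (simp add: exp_add[symmetric] field_simps)

lemma gauss_int:
  fixes A :: "real mat"
  assumes "A \<in> carrier_mat k k" "\<And>i j. i<k \<Longrightarrow> j<k \<Longrightarrow> A$$(i,j) = A$$(j,i)"
   "\<And>x. \<exists>i<k. x i \<noteq> 0 \<Longrightarrow> qf k A x > 0"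
  shows "det A > 0 \<and> (\<forall>c. (\<integral>\<^sup>+x. ennreal (exp (- qf k A (\<lambda>i. x i - c i) / 2)) \<partial>PiM {..<k} (\<lambda>_. lborel)) = ennreal (sqrt ((2*pi)^k / det A)))"
  using assms
proof (induction k arbitrary: A)
  case 0
  have d: "det A = 1" using 0 det_0_mat by blast
  show ?case using d by (simp add: PiM_empty qf_def nn_integral_count_space_finite)
next
  case (Suc k)
  define a where "a = A$$(k,k)"
  have "qf (Suc k) A (\<lambda>i. if i = k then 1 else 0) = a"
    unfolding qf_def a_def by (simp add: if_distrib[where f="\<lambda>x. x * _"] cong: if_cong)
  moreover have "qf (Suc k) A (\<lambda>i. if i = k then 1 else 0) > 0"
    by (rule Suc.prems(3)) auto
  ultimately have a: "a > 0" by simp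
  define A' where "A' = schur k A"
  have A'c: "A' \<in> carrier_mat k k" unfolding A'_def schur_def by simp
  have A'sym: "A'$$(i,j) = A'$$(j,i)" if "i<k" "j<k" for i j
    using that Suc.prems(2) unfolding A'_def schur_def by (auto simp: mult.commute)
  have split: "qf (Suc k) A (x(k:=t)) = qf k A' x + a * (t + (\<Sum>j<k. A$$(k,j) * x j)/a)\<^sup>2" for x t
    unfolding A'_def a_def by (rule qf_split) (use Suc.prems(2) a a_def in auto)
  have A'pos: "qf k A' x > 0" if "\<exists>i<k. x i \<noteq> 0" for x
  proof -
    have "qf k A' x = qf (Suc k) A (x(k := - (\<Sum>j<k. A$$(k,j) * x j)/a))"
      unfolding split by simp
    also have "\<dots> > 0" by (rule Suc.prems(3)) (use that in auto)
    finally show ?thesis .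
  qed
  note IH = Suc.IH[OF A'c A'sym A'pos]
  have dA: "det A = a * det A'" unfolding a_def A'_def
    by (rule schur_det) (use Suc.prems(1) a a_def in auto)
  have dpos: "det A > 0" using IH a dA by simp
  have "(\<integral>\<^sup>+x. ennreal (exp (- qf (Suc k) A (\<lambda>i. x i - c i) / 2)) \<partial>PiM {..<Suc k} (\<lambda>_. lborel)) = ennreal (sqrt ((2*pi)^(Suc k) / det A))" for c
  proof -
  have meas: "(\<lambda>x. qf (Suc k) A (\<lambda>i. x i - c i)) \<in> borel_measurable (PiM (insert k {..<k}) (\<lambda>_. lborel))"
    unfolding qf_def
    by (auto intro!: borel_measurable_sum borel_measurable_times borel_measurable_diff measurable_component_singleton)
  have "(\<integral>\<^sup>+x. ennreal (exp (- qf (Suc k) A (\<lambda>i. x i - c i) / 2)) \<partial>PiM {..<Suc k} (\<lambda>_. lborel))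
     = (\<integral>\<^sup>+x. ennreal (exp (- qf (Suc k) A (\<lambda>i. x i - c i) / 2)) \<partial>PiM (insert k {..<k}) (\<lambda>_. lborel))"
    by (simp add: lessThan_Suc)
  also have "\<dots> = (\<integral>\<^sup>+x. \<integral>\<^sup>+t. ennreal (exp (- qf (Suc k) A (\<lambda>i. (x(k:=t)) i - c i) / 2)) \<partial>lborel \<partial>PiM {..<k} (\<lambda>_. lborel))"
    by (rule product_sigma_finite.product_nn_integral_insert[OF psf_lborel]) (use meas in auto)
  also have "\<dots> = (\<integral>\<^sup>+x. ennreal (exp (- qf k A' (\<lambda>i. x i - c i) / 2)) * ennreal (sqrt (2*pi/a)) \<partial>PiM {..<k} (\<lambda>_. lborel))"
  proof (intro nn_integral_cong)
    fix x
    define y where "y = (\<lambda>i. x i - c i)"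
    have yk: "(\<lambda>i. (x(k:=t)) i - c i) = y(k := t - c k)" for t unfolding y_def by auto
    have "(\<integral>\<^sup>+t. ennreal (exp (- qf (Suc k) A (\<lambda>i. (x(k:=t)) i - c i) / 2)) \<partial>lborel)
        = (\<integral>\<^sup>+t. ennreal (exp (- qf k A' y / 2)) * ennreal (exp (- (a * (t + (- c k + (\<Sum>j<k. A$$(k,j) * y j)/a))\<^sup>2) / 2)) \<partial>lborel)"
    proof (intro nn_integral_cong)
      fix t
      have e: "qf (Suc k) A (y(k:=t - c k)) = qf k A' y + a * (t + (- c k + (\<Sum>j<k. A$$(k,j) * y j)/a))\<^sup>2"
        unfolding split by (simp add: algebra_simps)
      show "ennreal (exp (- qf (Suc k) A (\<lambda>i. (x(k:=t)) i - c i) / 2)) = ennreal (exp (- qf k A' y / 2)) * ennreal (exp (- (a * (t + (- c k + (\<Sum>j<k. A$$(k,j) * y j)/a))\<^sup>2) / 2))"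
        unfolding yk e exp_split by (simp add: ennreal_mult)
    qed
    also have "\<dots> = ennreal (exp (- qf k A' y / 2)) * (\<integral>\<^sup>+t. ennreal (exp (- (a * (t + (- c k + (\<Sum>j<k. A$$(k,j) * y j)/a))\<^sup>2) / 2)) \<partial>lborel)"
      by (rule nn_integral_cmult) simp
    also have "\<dots> = ennreal (exp (- qf k A' y / 2)) * ennreal (sqrt (2*pi/a))"
      using gauss_1d[OF a] by simp
    finally show "(\<integral>\<^sup>+t. ennreal (exp (- qf (Suc k) A (\<lambda>i. (x(k:=t)) i - c i) / 2)) \<partial>lborel) = ennreal (exp (- qf k A' (\<lambda>i. x i - c i) / 2)) * ennreal (sqrt (2*pi/a))" unfolding y_def .
  qed
  also have "\<dots> = (\<integral>\<^sup>+x. ennreal (exp (- qf k A' (\<lambda>i. x i - c i) / 2)) \<partial>PiM {..<k} (\<lambda>_. lborel)) * ennreal (sqrt (2*pi/a))"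
  proof (rule nn_integral_multc)
    have [measurable]: "(\<lambda>x. qf k A' (\<lambda>i. x i - c i)) \<in> borel_measurable (PiM {..<k} (\<lambda>_. lborel))"
      unfolding qf_def
      by (auto intro!: borel_measurable_sum borel_measurable_times borel_measurable_diff measurable_component_singleton)
    show "(\<lambda>x. ennreal (exp (- qf k A' (\<lambda>i. x i - c i) / 2))) \<in> borel_measurable (PiM {..<k} (\<lambda>_. lborel))" by measurable
  qed
  also have "\<dots> = ennreal (sqrt ((2*pi)^k / det A') * sqrt (2*pi/a))"
  proof -
    have "0 \<le> sqrt ((2*pi)^k / det A')" "0 \<le> sqrt (2*pi/a)" using IH a by auto
    then show ?thesis using IH by (simp add: ennreal_mult)
  qed
  also have "sqrt ((2*pi)^k / det A') * sqrt (2*pi/a) = sqrt ((2*pi)^(Suc k) / det A)"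
    unfolding dA by (simp add: real_sqrt_mult[symmetric] field_simps)
  finally show ?thesis .
  qed
  then show ?case using dpos by simp
qed


lemma qf_vec: "x \<in> carrier_vec k \<Longrightarrow> A \<in> carrier_mat k k \<Longrightarrow> qf k A (\<lambda>i. x$i) = x \<bullet> (A *\<^sub>v x)"
  unfolding qf_def scalar_prod_def mult_mat_vec_def
  by (auto simp: atLeast0LessThan sum_distrib_left mult.assoc intro!: sum.cong)

lemma qf_shift:
  fixes A :: "real mat"
  assumes sym: "\<And>i j. i<k \<Longrightarrow> j<k \<Longrightarrow> A$$(i,j) = A$$(j,i)"
    and w: "\<And>i. i<k \<Longrightarrow> (\<Sum>j<k. A$$(i,j) * c j) = w i"
  shows "qf k A (\<lambda>i. x i - c i) = qf k A x - 2 * (\<Sum>i<k. x i * w i) + (\<Sum>i<k. c i * w i)"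
proof -
  have "qf k A (\<lambda>i. x i - c i) = (\<Sum>i<k. \<Sum>j<k. x i * A$$(i,j) * x j - x i * (A$$(i,j) * c j)
        - x j * (A$$(j,i) * c i) + c i * (A$$(i,j) * c j))"
    unfolding qf_def by (intro sum.cong) (auto simp: sym algebra_simps)
  also have "\<dots> = qf k A x - (\<Sum>i<k. \<Sum>j<k. x i * (A$$(i,j) * c j)) - (\<Sum>i<k. \<Sum>j<k. x j * (A$$(j,i) * c i))
        + (\<Sum>i<k. \<Sum>j<k. c i * (A$$(i,j) * c j))"
    unfolding qf_def by (simp add: sum_subtractf sum.distrib)
  also have "(\<Sum>i<k. \<Sum>j<k. x j * (A$$(j,i) * c i)) = (\<Sum>i<k. \<Sum>j<k. x i * (A$$(i,j) * c j))"
    by (rule sum.swap)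
  also have "(\<Sum>i<k. \<Sum>j<k. x i * (A$$(i,j) * c j)) = (\<Sum>i<k. x i * w i)"
    by (intro sum.cong) (auto simp: w[symmetric] sum_distrib_left)
  also have "(\<Sum>i<k. \<Sum>j<k. c i * (A$$(i,j) * c j)) = (\<Sum>i<k. c i * w i)"
    by (intro sum.cong) (auto simp: w[symmetric] sum_distrib_left)
  finally show ?thesis by simp
qed

lemma ennreal_div_split: "0 \<le> a \<Longrightarrow> 0 < (c::real) \<Longrightarrow> ennreal (a / c) = ennreal a * ennreal (1/c)"
  using ennreal_mult[of a "1/c"] by simp

locale mvn =
  fixes k :: nat and D Di :: "real mat"
  assumes sp: "sym_posdef k D" and inv: "mat_inverse D = Some Di"
begin

lemma Dc: "D \<in> carrier_mat k k" using sp unfolding sym_posdef_def by auto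
lemma inv_props: "D * Di = 1\<^sub>m k" "Di * D = 1\<^sub>m k" "Di \<in> carrier_mat k k"
  using mat_inverse(2)[OF Dc inv] by auto
lemma Dic: "Di \<in> carrier_mat k k" using inv_props by auto

lemma Dsym: "i<k \<Longrightarrow> j<k \<Longrightarrow> D$$(i,j) = D$$(j,i)"
proof -
  assume "i<k" "j<k"
  have "transpose_mat D = D" using sp unfolding sym_posdef_def by auto
  then have "transpose_mat D $$ (j,i) = D $$ (j,i)" by simp
  then show ?thesis using \<open>i<k\<close> \<open>j<k\<close> Dc by auto
qed

lemma DT: "transpose_mat D = D" using sp unfolding sym_posdef_def by auto

lemma DiT: "transpose_mat Di = Di"
proof -
  have "transpose_mat Di * D = transpose_mat Di * transpose_mat D" using DT by simp
  also have "\<dots> = transpose_mat (D * Di)" using transpose_mult[OF Dc Dic] by simp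
  also have "\<dots> = 1\<^sub>m k" using inv_props by simp
  finally have 1: "transpose_mat Di * D = 1\<^sub>m k" .
  have "transpose_mat Di = transpose_mat Di * (D * Di)" using inv_props Dic by simp
  also have "\<dots> = (transpose_mat Di * D) * Di" using assoc_mult_mat[of "transpose_mat Di" k k D k Di k] Dc Dic by simp
  also have "\<dots> = Di" using 1 Dic by simp
  finally show ?thesis .
qed

lemma Disym: "i<k \<Longrightarrow> j<k \<Longrightarrow> Di$$(i,j) = Di$$(j,i)"
proof -
  assume "i<k" "j<k"
  have "transpose_mat Di $$ (j,i) = Di $$ (j,i)" using DiT by simp
  then show ?thesis using \<open>i<k\<close> \<open>j<k\<close> Dic by auto
qed

lemma Dpos: "\<exists>i<k. x i \<noteq> 0 \<Longrightarrow> qf k D x > 0"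
proof -
  assume "\<exists>i<k. x i \<noteq> 0"
  then have "vec k x \<noteq> 0\<^sub>v k" by (auto simp: vec_eq_iff)
  then have "(\<Sum>i<k. \<Sum>j<k. vec k x $ i * D $$ (i, j) * vec k x $ j) > 0"
    using sp unfolding sym_posdef_def by auto
  then show ?thesis unfolding qf_def by simp
qed

lemma Dipos: "\<exists>i<k. x i \<noteq> 0 \<Longrightarrow> qf k Di x > 0"
proof -
  assume nz: "\<exists>i<k. x i \<noteq> 0"
  define xv where "xv = vec k x"
  define y where "y = Di *\<^sub>v xv"
  have xv: "xv \<in> carrier_vec k" unfolding xv_def by simp
  have y: "y \<in> carrier_vec k" unfolding y_def using Dic xv by simp
  have Dy: "D *\<^sub>v y = xv" unfolding y_def
    using assoc_mult_mat_vec[OF Dc Dic xv, symmetric] inv_props xv by simp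
  have xnz: "xv \<noteq> 0\<^sub>v k" using nz unfolding xv_def by (auto simp: vec_eq_iff)
  have ynz: "y \<noteq> 0\<^sub>v k" using Dy xnz Dc by auto
  have "qf k Di x = qf k Di (\<lambda>i. xv$i)" unfolding qf_def xv_def by simp
  also have "\<dots> = xv \<bullet> y" unfolding y_def by (rule qf_vec[OF xv Dic])
  also have "\<dots> = y \<bullet> (D *\<^sub>v y)" using Dy comm_scalar_prod[OF y xv] by simp
  also have "\<dots> = qf k D (\<lambda>i. y$i)" by (rule qf_vec[OF y Dc, symmetric])
  also have "\<dots> > 0" apply (rule Dpos) using ynz y by (auto simp: vec_eq_iff)
  finally show ?thesis .
qed

lemma detprod: "det D * det Di = 1"
  using det_mult[OF Dc Dic] inv_props det_one by simp

lemma gi: "det Di > 0 \<and> (\<forall>c. (\<integral>\<^sup>+x. ennreal (exp (- qf k Di (\<lambda>i. x i - c i) / 2)) \<partial>PiM {..<k} (\<lambda>_. lborel)) = ennreal (sqrt ((2*pi)^k / det Di)))"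
  by (rule gauss_int[OF Dic Disym Dipos])

lemma detD: "det D > 0" using gi detprod zero_less_mult_pos2[of "det D" "det Di"] by simp

definition "nc = sqrt ((2*pi)^k * det D)"

lemma nc_pos: "nc > 0" unfolding nc_def using detD by simp

definition "dens x = ennreal (exp (- qf k Di x / 2) / nc)"

lemma mvn_eq: "mvnormal k D = density (PiM {..<k} (\<lambda>_. lborel)) dens"
  unfolding mvnormal_def dens_def nc_def qf_def using inv by simp

lemma dens_meas[measurable]: "dens \<in> borel_measurable (PiM {..<k} (\<lambda>_. lborel))"
proof -
  have [measurable]: "(\<lambda>x. qf k Di x) \<in> borel_measurable (PiM {..<k} (\<lambda>_. lborel))" by (rule qf_measurable) auto
  show ?thesis unfolding dens_def by measurable
qed

lemma space_mvn: "space (mvnormal k D) = space (PiM {..<k} (\<lambda>_. lborel))"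
  unfolding mvn_eq by simp
lemma sets_mvn: "sets (mvnormal k D) = sets (PiM {..<k} (\<lambda>_. lborel))"
  unfolding mvn_eq by simp

lemma int_mvn: "f \<in> borel_measurable (PiM {..<k} (\<lambda>_. lborel)) \<Longrightarrow>
  (\<integral>\<^sup>+x. f x \<partial>mvnormal k D) = (\<integral>\<^sup>+x. dens x * f x \<partial>PiM {..<k} (\<lambda>_. lborel))"
  unfolding mvn_eq by (rule nn_integral_density) auto

lemma int_shift: "(\<integral>\<^sup>+x. dens (\<lambda>i. x i - c i) \<partial>PiM {..<k} (\<lambda>_. lborel)) = 1"
proof -
  have "(\<integral>\<^sup>+x. dens (\<lambda>i. x i - c i) \<partial>PiM {..<k} (\<lambda>_. lborel))
     = (\<integral>\<^sup>+x. ennreal (exp (- qf k Di (\<lambda>i. x i - c i) / 2)) * ennreal (1/nc) \<partial>PiM {..<k} (\<lambda>_. lborel))"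
    unfolding dens_def using nc_pos by (intro nn_integral_cong) (rule ennreal_div_split, auto)
  also have "\<dots> = (\<integral>\<^sup>+x. ennreal (exp (- qf k Di (\<lambda>i. x i - c i) / 2)) \<partial>PiM {..<k} (\<lambda>_. lborel)) * ennreal (1/nc)"
  proof (rule nn_integral_multc)
    have [measurable]: "(\<lambda>x. qf k Di (\<lambda>i. x i - c i)) \<in> borel_measurable (PiM {..<k} (\<lambda>_. lborel))"
      unfolding qf_def
      by (auto intro!: borel_measurable_sum borel_measurable_times borel_measurable_diff measurable_component_singleton)
    show "(\<lambda>x. ennreal (exp (- qf k Di (\<lambda>i. x i - c i) / 2))) \<in> borel_measurable (PiM {..<k} (\<lambda>_. lborel))" by measurable
  qed
  also have "\<dots> = ennreal (sqrt ((2*pi)^k / det Di) * (1/nc))"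
  proof -
    have "0 \<le> sqrt ((2*pi)^k / det Di)" using gi by simp
    then show ?thesis using gi nc_pos ennreal_mult[of "sqrt ((2*pi)^k / det Di)" "1/nc"] by simp
  qed
  also have "sqrt ((2*pi)^k / det Di) * (1/nc) = 1"
  proof -
    have "det Di = 1 / det D" using detprod detD by (simp add: field_simps)
    then show ?thesis unfolding nc_def using detD by (simp add: real_sqrt_mult real_sqrt_divide)
  qed
  finally show ?thesis by simp
qed

lemma prob: "prob_space (mvnormal k D)"
proof
  have "emeasure (mvnormal k D) (space (mvnormal k D)) = (\<integral>\<^sup>+x. dens x \<partial>PiM {..<k} (\<lambda>_. lborel))"
    unfolding mvn_eq by (simp add: emeasure_density)
  also have "\<dots> = 1" using int_shift[of "\<lambda>_. 0"] by simp
  finally show "emeasure (mvnormal k D) (space (mvnormal k D)) = 1" .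
qed

end


context mvn begin

lemma DiD_entry: "i<k \<Longrightarrow> l<k \<Longrightarrow> (\<Sum>j<k. Di$$(i,j) * D$$(j,l)) = (if i = l then 1 else 0)"
proof -
  assume "i<k" "l<k"
  have "(Di * D) $$ (i,l) = (\<Sum>j<k. Di$$(i,j) * D$$(j,l))"
    using \<open>i<k\<close> \<open>l<k\<close> Dc Dic by (simp add: scalar_prod_def atLeast0LessThan)
  then show ?thesis using inv_props \<open>i<k\<close> \<open>l<k\<close> by simp
qed

lemma Di_c: "i<k \<Longrightarrow> (\<Sum>j<k. Di$$(i,j) * (t * (\<Sum>l<k. D$$(j,l) * v l))) = t * v i"
proof -
  assume i: "i<k"
  have "(\<Sum>j<k. Di$$(i,j) * (t * (\<Sum>l<k. D$$(j,l) * v l))) = t * (\<Sum>l<k. (\<Sum>j<k. Di$$(i,j) * D$$(j,l)) * v l)"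
  proof -
    have "(\<Sum>j<k. Di$$(i,j) * (t * (\<Sum>l<k. D$$(j,l) * v l))) = t * (\<Sum>j<k. \<Sum>l<k. Di$$(i,j) * D$$(j,l) * v l)"
      by (simp add: sum_distrib_left algebra_simps)
    also have "(\<Sum>j<k. \<Sum>l<k. Di$$(i,j) * D$$(j,l) * v l) = (\<Sum>l<k. \<Sum>j<k. Di$$(i,j) * D$$(j,l) * v l)"
      by (rule sum.swap)
    also have "\<dots> = (\<Sum>l<k. (\<Sum>j<k. Di$$(i,j) * D$$(j,l)) * v l)"
      by (simp add: sum_distrib_right)
    finally show ?thesis .
  qed
  also have "\<dots> = t * (\<Sum>l<k. (if i = l then v l else 0))"
    by (intro arg_cong[where f="\<lambda>x. t * x"] sum.cong) (auto simp: DiD_entry i)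
  also have "\<dots> = t * v i" using i by simp
  finally show ?thesis .
qed

lemma shift_meas: "(\<lambda>x. f (qf k A (\<lambda>i. x i - c i))) \<in> borel_measurable (PiM {..<k} (\<lambda>_. lborel))"
  if "f \<in> borel_measurable borel"
proof -
  have [measurable]: "(\<lambda>x. qf k A (\<lambda>i. x i - c i)) \<in> borel_measurable (PiM {..<k} (\<lambda>_. lborel))"
      unfolding qf_def
      by (auto intro!: borel_measurable_sum borel_measurable_times borel_measurable_diff measurable_component_singleton)
  show ?thesis using that by measurable
qed

lemma lin_meas: "(\<lambda>x. (\<Sum>i<k. (v::nat\<Rightarrow>real) i * x i)) \<in> borel_measurable (PiM {..<k} (\<lambda>_. lborel))"
proof (rule borel_measurable_sum)
  fix i assume "i \<in> {..<k}"
  then have "(\<lambda>x. x i) \<in> borel_measurable (PiM {..<k} (\<lambda>_. lborel))"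
    using measurable_component_singleton[of i "{..<k}" "\<lambda>_. lborel"] by simp
  then show "(\<lambda>x. v i * x i) \<in> borel_measurable (PiM {..<k} (\<lambda>_. lborel))" by (intro borel_measurable_times) auto
qed

lemma mgf_lin: "(\<integral>\<^sup>+x. ennreal (exp (t * (\<Sum>i<k. v i * x i))) \<partial>mvnormal k D) = ennreal (exp (t\<^sup>2 * qf k D v / 2))"
proof -
  define c where "c = (\<lambda>j. t * (\<Sum>l<k. D$$(j,l) * v l))"
  have qs: "qf k Di (\<lambda>i. x i - c i) = qf k Di x - 2 * (\<Sum>i<k. x i * (t * v i)) + (\<Sum>i<k. c i * (t * v i))" for x
    by (rule qf_shift) (auto simp: Disym c_def Di_c)
  have cc: "(\<Sum>i<k. c i * (t * v i)) = t\<^sup>2 * qf k D v"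
    unfolding c_def qf_def by (simp add: sum_distrib_left sum_distrib_right power2_eq_square algebra_simps)
  have pt: "dens x * ennreal (exp (t * (\<Sum>i<k. v i * x i))) = dens (\<lambda>i. x i - c i) * ennreal (exp (t\<^sup>2 * qf k D v / 2))" for x
  proof -
    have E: "- qf k Di x / 2 + t * (\<Sum>i<k. v i * x i) = - qf k Di (\<lambda>i. x i - c i) / 2 + t\<^sup>2 * qf k D v / 2"
    proof -
      have ls: "(\<Sum>i<k. x i * (t * v i)) = t * (\<Sum>i<k. v i * x i)" by (simp add: sum_distrib_left algebra_simps)
      show ?thesis unfolding qs cc ls by (simp add: field_simps)
    qed
    have "exp (- qf k Di x / 2) * exp (t * (\<Sum>i<k. v i * x i)) = exp (- qf k Di (\<lambda>i. x i - c i) / 2) * exp (t\<^sup>2 * qf k D v / 2)"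
      using arg_cong[where f=exp, OF E] by (simp only: exp_add)
    then have "exp (- qf k Di x / 2) / nc * exp (t * (\<Sum>i<k. v i * x i)) = exp (- qf k Di (\<lambda>i. x i - c i) / 2) / nc * exp (t\<^sup>2 * qf k D v / 2)"
      by simp
    moreover have "dens x * ennreal (exp (t * (\<Sum>i<k. v i * x i))) = ennreal (exp (- qf k Di x / 2) / nc * exp (t * (\<Sum>i<k. v i * x i)))"
      unfolding dens_def by (rule ennreal_mult[symmetric]) (use nc_pos in auto)
    moreover have "dens (\<lambda>i. x i - c i) * ennreal (exp (t\<^sup>2 * qf k D v / 2)) = ennreal (exp (- qf k Di (\<lambda>i. x i - c i) / 2) / nc * exp (t\<^sup>2 * qf k D v / 2))"
      unfolding dens_def by (rule ennreal_mult[symmetric]) (use nc_pos in auto)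
    ultimately show ?thesis by (simp only:)
  qed
  have "(\<integral>\<^sup>+x. ennreal (exp (t * (\<Sum>i<k. v i * x i))) \<partial>mvnormal k D)
      = (\<integral>\<^sup>+x. dens x * ennreal (exp (t * (\<Sum>i<k. v i * x i))) \<partial>PiM {..<k} (\<lambda>_. lborel))"
  proof (rule int_mvn)
    note [measurable] = lin_meas[of v]
    show "(\<lambda>x. ennreal (exp (t * (\<Sum>i<k. v i * x i)))) \<in> borel_measurable (PiM {..<k} (\<lambda>_. lborel))" by measurable
  qed
  also have "\<dots> = (\<integral>\<^sup>+x. dens (\<lambda>i. x i - c i) * ennreal (exp (t\<^sup>2 * qf k D v / 2)) \<partial>PiM {..<k} (\<lambda>_. lborel))"
    by (simp add: pt)
  also have "\<dots> = (\<integral>\<^sup>+x. dens (\<lambda>i. x i - c i) \<partial>PiM {..<k} (\<lambda>_. lborel)) * ennreal (exp (t\<^sup>2 * qf k D v / 2))"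
  proof (rule nn_integral_multc)
    show "(\<lambda>x. dens (\<lambda>i. x i - c i)) \<in> borel_measurable (PiM {..<k} (\<lambda>_. lborel))"
      unfolding dens_def by (rule shift_meas[where f="\<lambda>q. ennreal (exp (- q / 2) / nc)"]) measurable
  qed
  also have "\<dots> = ennreal (exp (t\<^sup>2 * qf k D v / 2))" using int_shift by simp
  finally show ?thesis .
qed

end


lemma hs_1d: "(\<integral>\<^sup>+g. ennreal (exp (- g\<^sup>2 / 2) / sqrt (2*pi) * exp (s * g)) \<partial>lborel) = ennreal (exp (s\<^sup>2 / 2))"
proof -
  have eq: "exp (- g\<^sup>2 / 2) / sqrt (2*pi) * exp (s * g) = exp (s\<^sup>2 / 2) * normal_density s 1 g" for g
  proof -
    have "- g\<^sup>2 / 2 + s * g = s\<^sup>2 / 2 + (- (g - s)\<^sup>2 / 2)" by (simp add: power2_eq_square field_simps)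
    then have "exp (- g\<^sup>2 / 2) * exp (s * g) = exp (s\<^sup>2 / 2) * exp (- (g - s)\<^sup>2 / 2)"
      using arg_cong[where f=exp] by (simp only: exp_add[symmetric])
    then show ?thesis unfolding normal_density_def by simp
  qed
  have "(\<integral>\<^sup>+g. ennreal (exp (- g\<^sup>2 / 2) / sqrt (2*pi) * exp (s * g)) \<partial>lborel)
      = (\<integral>\<^sup>+g. ennreal (exp (s\<^sup>2 / 2)) * ennreal (normal_density s 1 g) \<partial>lborel)"
  proof (intro nn_integral_cong)
    fix g
    have "ennreal (exp (s\<^sup>2 / 2)) * ennreal (normal_density s 1 g) = ennreal (exp (s\<^sup>2 / 2) * normal_density s 1 g)"
      by (rule ennreal_mult[symmetric]) (auto simp: normal_density_nonneg)
    then show "ennreal (exp (- g\<^sup>2 / 2) / sqrt (2*pi) * exp (s * g)) = ennreal (exp (s\<^sup>2 / 2)) * ennreal (normal_density s 1 g)"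
      by (simp only: eq)
  qed
  also have "\<dots> = ennreal (exp (s\<^sup>2 / 2)) * (\<integral>\<^sup>+g. ennreal (normal_density s 1 g) \<partial>lborel)"
    by (rule nn_integral_cmult) simp
  also have "(\<integral>\<^sup>+g. ennreal (normal_density s 1 g) \<partial>lborel) = 1"
    using prob_space.emeasure_space_1[OF prob_space_normal_density[of 1 s]]
    by (simp add: emeasure_density)
  finally show ?thesis by simp
qed

lemma gauss_0: "b > 0 \<Longrightarrow> (\<integral>\<^sup>+g. ennreal (exp (- g\<^sup>2 / 2) / sqrt (2*pi) * exp (a * g\<^sup>2)) \<partial>lborel) = ennreal (1 / sqrt b)"
  if "b = 1 - 2 * a" for a b :: real
proof -
  assume b: "b > 0"
  have "(\<integral>\<^sup>+g. ennreal (exp (- g\<^sup>2 / 2) / sqrt (2*pi) * exp (a * g\<^sup>2)) \<partial>lborel)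
      = (\<integral>\<^sup>+g. ennreal (1 / sqrt (2*pi)) * ennreal (exp (- (b * (g + 0)\<^sup>2) / 2)) \<partial>lborel)"
  proof (intro nn_integral_cong)
    fix g
    have "exp (- g\<^sup>2 / 2) * exp (a * g\<^sup>2) = exp (- (b * (g + 0)\<^sup>2) / 2)"
      unfolding exp_add[symmetric] that by (simp add: algebra_simps)
    then show "ennreal (exp (- g\<^sup>2 / 2) / sqrt (2*pi) * exp (a * g\<^sup>2)) = ennreal (1 / sqrt (2*pi)) * ennreal (exp (- (b * (g + 0)\<^sup>2) / 2))"
      by (simp add: ennreal_mult[symmetric])
  qed
  also have "\<dots> = ennreal (1 / sqrt (2*pi)) * (\<integral>\<^sup>+g. ennreal (exp (- (b * (g + 0)\<^sup>2) / 2)) \<partial>lborel)"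
    by (rule nn_integral_cmult) simp
  also have "\<dots> = ennreal (1 / sqrt (2*pi)) * ennreal (sqrt (2*pi/b))" using gauss_1d[OF b, of 0] by simp
  also have "\<dots> = ennreal (1 / sqrt (2*pi) * sqrt (2*pi/b))" by (rule ennreal_mult[symmetric]) (use b in auto)
  also have "1 / sqrt (2*pi) * sqrt (2*pi/b) = 1 / sqrt b" using b by (simp add: real_sqrt_divide)
  finally show ?thesis .
qed



context mvn begin

lemma Y_meas_mvn: "(\<lambda>x. \<Sum>i<k. (v::nat\<Rightarrow>real) i * x i) \<in> borel_measurable (mvnormal k D)"
  by (subst measurable_cong_sets[OF sets_mvn refl]) (rule lin_meas)

lemma mgf_sq:
  assumes l: "0 \<le> l" and lt: "2 * l * qf k D v < 1"
  shows "(\<integral>\<^sup>+x. ennreal (exp (l * (\<Sum>i<k. v i * x i)\<^sup>2)) \<partial>mvnormal k D) = ennreal (1 / sqrt (1 - 2*l*qf k D v))"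
proof -
  interpret P: prob_space "mvnormal k D" by (rule prob)
  define Y where "Y x = (\<Sum>i<k. v i * x i)" for x :: "nat \<Rightarrow> real"
  define a where "a = sqrt (2*l)"
  have a2: "a\<^sup>2 = 2*l" unfolding a_def using l by simp
  define F where "F x g = ennreal (exp (- g\<^sup>2 / 2) / sqrt (2*pi) * exp ((a * Y x) * g))" for x g
  have [measurable]: "Y \<in> borel_measurable (mvnormal k D)" unfolding Y_def[abs_def] by (rule Y_meas_mvn)
  have Fm: "(\<lambda>(x,g). F x g) \<in> borel_measurable (mvnormal k D \<Otimes>\<^sub>M lborel)"
    unfolding F_def by measurable
  have psf: "pair_sigma_finite (mvnormal k D) lborel"
    by (simp add: pair_sigma_finite_def P.sigma_finite_measure_axioms lborel.sigma_finite_measure_axioms)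
  have "(\<integral>\<^sup>+x. ennreal (exp (l * (\<Sum>i<k. v i * x i)\<^sup>2)) \<partial>mvnormal k D) = (\<integral>\<^sup>+x. \<integral>\<^sup>+g. F x g \<partial>lborel \<partial>mvnormal k D)"
  proof (intro nn_integral_cong)
    fix x
    have "(a * Y x)\<^sup>2 / 2 = l * (\<Sum>i<k. v i * x i)\<^sup>2" unfolding Y_def power_mult_distrib a2 by simp
    then show "ennreal (exp (l * (\<Sum>i<k. v i * x i)\<^sup>2)) = (\<integral>\<^sup>+g. F x g \<partial>lborel)"
      unfolding F_def hs_1d by simp
  qed
  also have "\<dots> = (\<integral>\<^sup>+g. \<integral>\<^sup>+x. F x g \<partial>mvnormal k D \<partial>lborel)"
    by (rule pair_sigma_finite.Fubini'[OF psf Fm, symmetric])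
  also have "\<dots> = (\<integral>\<^sup>+g. ennreal (exp (- g\<^sup>2 / 2) / sqrt (2*pi) * exp ((l * qf k D v) * g\<^sup>2)) \<partial>lborel)"
  proof (intro nn_integral_cong)
    fix g
    have "(\<integral>\<^sup>+x. F x g \<partial>mvnormal k D) = (\<integral>\<^sup>+x. ennreal (exp (- g\<^sup>2 / 2) / sqrt (2*pi)) * ennreal (exp ((a * g) * Y x)) \<partial>mvnormal k D)"
      unfolding F_def by (intro nn_integral_cong) (subst ennreal_mult[symmetric], auto simp: mult_ac)
    also have "\<dots> = ennreal (exp (- g\<^sup>2 / 2) / sqrt (2*pi)) * (\<integral>\<^sup>+x. ennreal (exp ((a * g) * Y x)) \<partial>mvnormal k D)"
      by (rule nn_integral_cmult) measurable
    also have "(\<integral>\<^sup>+x. ennreal (exp ((a * g) * Y x)) \<partial>mvnormal k D) = ennreal (exp ((a*g)\<^sup>2 * qf k D v / 2))"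
      unfolding Y_def by (rule mgf_lin)
    also have "(a*g)\<^sup>2 * qf k D v / 2 = (l * qf k D v) * g\<^sup>2" unfolding power_mult_distrib a2 by simp
    also have "ennreal (exp (- g\<^sup>2 / 2) / sqrt (2*pi)) * ennreal (exp ((l * qf k D v) * g\<^sup>2)) = ennreal (exp (- g\<^sup>2 / 2) / sqrt (2*pi) * exp ((l * qf k D v) * g\<^sup>2))"
      by (rule ennreal_mult[symmetric]) auto
    finally show "(\<integral>\<^sup>+x. F x g \<partial>mvnormal k D) = ennreal (exp (- g\<^sup>2 / 2) / sqrt (2*pi) * exp ((l * qf k D v) * g\<^sup>2))" .
  qed
  also have "\<dots> = ennreal (1 / sqrt (1 - 2*l*qf k D v))"
    by (rule gauss_0) (use lt in auto)
  finally show ?thesis .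
qed

end


lemma chernoff:
  assumes M: "prob_space M" and f[measurable]: "f \<in> borel_measurable M" and l: "0 \<le> l"
  shows "emeasure (PiM {..<n} (\<lambda>_. M)) {w \<in> space (PiM {..<n} (\<lambda>_. M)). a \<le> (\<Sum>i<n. f (w i))}
     \<le> ennreal (exp (- l * a)) * (\<integral>\<^sup>+x. ennreal (exp (l * f x)) \<partial>M) ^ n"
proof -
  interpret P: prob_space M by (rule M)
  have psf: "product_sigma_finite (\<lambda>_. M)"
    by (simp add: product_sigma_finite_def P.sigma_finite_measure_axioms)
  define S where "S = {w \<in> space (PiM {..<n} (\<lambda>_. M)). a \<le> (\<Sum>i<n. f (w i))}"
  have S: "S \<in> sets (PiM {..<n} (\<lambda>_. M))" unfolding S_def by measurable
  have "emeasure (PiM {..<n} (\<lambda>_. M)) S = (\<integral>\<^sup>+w. indicator S w \<partial>PiM {..<n} (\<lambda>_. M))"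
    using S by simp
  also have "\<dots> \<le> (\<integral>\<^sup>+w. ennreal (exp (- l * a)) * (\<Prod>i<n. ennreal (exp (l * f (w i)))) \<partial>PiM {..<n} (\<lambda>_. M))"
  proof (intro nn_integral_mono)
    fix w
    have "(\<Prod>i<n. ennreal (exp (l * f (w i)))) = ennreal (\<Prod>i<n. exp (l * f (w i)))"
      by (simp add: prod_ennreal)
    also have "(\<Prod>i<n. exp (l * f (w i))) = exp (l * (\<Sum>i<n. f (w i)))"
      by (simp add: exp_sum sum_distrib_left)
    finally have pe: "ennreal (exp (- l * a)) * (\<Prod>i<n. ennreal (exp (l * f (w i)))) = ennreal (exp (l * ((\<Sum>i<n. f (w i)) - a)))"
      by (simp add: ennreal_mult[symmetric] exp_add[symmetric] algebra_simps)
    show "indicator S w \<le> ennreal (exp (- l * a)) * (\<Prod>i<n. ennreal (exp (l * f (w i))))"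
    proof (cases "w \<in> S")
      case True
      then have "0 \<le> l * ((\<Sum>i<n. f (w i)) - a)" using l unfolding S_def by auto
      then have "1 \<le> exp (l * ((\<Sum>i<n. f (w i)) - a))" by simp
      then show ?thesis using True unfolding pe by simp
    qed (simp)
  qed
  also have "\<dots> = ennreal (exp (- l * a)) * (\<integral>\<^sup>+w. (\<Prod>i<n. ennreal (exp (l * f (w i)))) \<partial>PiM {..<n} (\<lambda>_. M))"
    by (rule nn_integral_cmult) measurable
  also have "(\<integral>\<^sup>+w. (\<Prod>i<n. ennreal (exp (l * f (w i)))) \<partial>PiM {..<n} (\<lambda>_. M)) = (\<Prod>i<n. \<integral>\<^sup>+x. ennreal (exp (l * f x)) \<partial>M)"
    by (rule product_sigma_finite.product_nn_integral_prod[OF psf, where f="\<lambda>_ x. ennreal (exp (l * f x))"]) auto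
  also have "\<dots> = (\<integral>\<^sup>+x. ennreal (exp (l * f x)) \<partial>M) ^ n" by simp
  finally show ?thesis unfolding S_def .
qed


lemma R1: fixes x :: real assumes "0 \<le> x" "x \<le> 1/2" shows "1 / sqrt (1 - x) \<le> exp ((x + 2 * x\<^sup>2) / 2)"
proof -
  have pos: "1 - x > 0" using assms by simp
  have "sqrt (1 - x) = exp (ln (1 - x) / 2)"
    using pos by (simp add: sqrt_def root_powr_inverse powr_def)
  then have "1 / sqrt (1 - x) = exp (- ln (1 - x) / 2)" by (simp add: exp_minus field_simps)
  also have "\<dots> \<le> exp ((x + 2 * x\<^sup>2) / 2)"
    using ln_one_minus_pos_lower_bound[OF assms] by simp
  finally show ?thesis .
qed

lemma R2: fixes x :: real assumes "0 \<le> x" "x < 1" shows "1 + x / 2 \<le> 1 / sqrt (1 - x)"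
proof -
  have pos: "1 - x > 0" using assms by simp
  have "(1 + x/2)\<^sup>2 * (1 - x) \<le> 1"
  proof -
    have "(1 + x/2)\<^sup>2 * (1 - x) = 1 - 3/4 * x\<^sup>2 - x^3/4" by (simp add: power2_eq_square power3_eq_cube field_simps)
    also have "\<dots> \<le> 1"
    proof -
      have "0 \<le> x^3" "0 \<le> x\<^sup>2" using assms by simp_all
      then show ?thesis by linarith
    qed
    finally show ?thesis .
  qed
  then have "sqrt ((1 + x/2)\<^sup>2 * (1 - x)) \<le> 1" by simp
  then have "(1 + x/2) * sqrt (1 - x) \<le> 1" using assms by (simp add: real_sqrt_mult)
  then show ?thesis using pos by (simp add: field_simps)
qed

lemma R3: fixes u :: real assumes "0 \<le> u" shows "exp (- u) + exp u \<le> 2 + u\<^sup>2 * exp u"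
proof -
  have e1: "1 - u \<le> exp (- u)" using exp_ge_add_one_self[of "-u"] by simp
  have "exp u - 1 \<le> u * exp u"
  proof -
    have "exp u * (1 - u) \<le> exp u * exp (-u)" using e1 by (simp add: mult_left_mono)
    then show ?thesis by (simp add: exp_minus algebra_simps)
  qed
  moreover have "0 \<le> exp u - 1" using assms by simp
  ultimately have "(exp u - 1)\<^sup>2 \<le> (u * exp u)\<^sup>2" by (simp add: power_mono)
  then have "(exp u - 1)\<^sup>2 / exp u \<le> u\<^sup>2 * exp u" by (simp add: field_simps power2_eq_square)
  moreover have "(exp u - 1)\<^sup>2 / exp u = exp (-u) + exp u - 2"
    by (simp add: power2_eq_square field_simps exp_minus)
  ultimately show ?thesis by simp
qed

lemma R4: fixes z :: real assumes "0 \<le> z" shows "z\<^sup>2 / 4 \<le> exp z"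
proof -
  have "1 + z/2 \<le> exp (z/2)" by (rule exp_ge_add_one_self)
  then have "(1 + z/2)\<^sup>2 \<le> (exp (z/2))\<^sup>2" using assms by (intro power_mono) auto
  also have "(exp (z/2))\<^sup>2 = exp z" by (simp add: power2_eq_square exp_add[symmetric])
  finally have "(1 + z/2)\<^sup>2 \<le> exp z" .
  moreover have "z\<^sup>2 / 4 \<le> (1 + z/2)\<^sup>2" using assms by (simp add: power2_eq_square field_simps)
  ultimately show ?thesis by simp
qed



context mvn begin

lemma qf_nonneg: "0 \<le> qf k D v"
proof (cases "\<exists>i<k. v i \<noteq> 0")
  case True then show ?thesis using Dpos[of v] by simp
next
  case False then show ?thesis unfolding qf_def by simp
qed

lemma mgf_up:
  assumes l: "0 \<le> l" and ls: "l * qf k D v \<le> 1/4"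
  shows "(\<integral>\<^sup>+x. ennreal (exp (l * (\<Sum>i<k. v i * x i)\<^sup>2)) \<partial>mvnormal k D) \<le> ennreal (exp (l * qf k D v + 4 * l\<^sup>2 * (qf k D v)\<^sup>2))"
proof -
  define \<sigma> where "\<sigma> = qf k D v"
  have s0: "0 \<le> \<sigma>" unfolding \<sigma>_def by (rule qf_nonneg)
  have "(\<integral>\<^sup>+x. ennreal (exp (l * (\<Sum>i<k. v i * x i)\<^sup>2)) \<partial>mvnormal k D) = ennreal (1 / sqrt (1 - 2*l*\<sigma>))"
    unfolding \<sigma>_def by (rule mgf_sq) (use l ls in auto)
  also have "1 / sqrt (1 - 2*l*\<sigma>) \<le> exp ((2*l*\<sigma> + 2 * (2*l*\<sigma>)\<^sup>2) / 2)"
    by (rule R1) (use l s0 ls \<sigma>_def in auto)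
  also have "(2*l*\<sigma> + 2 * (2*l*\<sigma>)\<^sup>2) / 2 = l * \<sigma> + 4 * l\<^sup>2 * \<sigma>\<^sup>2" by (simp add: power2_eq_square)
  finally show ?thesis unfolding \<sigma>_def by (simp add: ennreal_leI)
qed

lemma mgf_low:
  assumes s: "0 < s" "qf k D v \<le> s" and mu: "0 \<le> mu" "mu \<le> 1 / (8 * s)"
  shows "(\<integral>\<^sup>+x. ennreal (exp (- mu * (\<Sum>i<k. v i * x i)\<^sup>2)) \<partial>mvnormal k D) \<le> ennreal (exp (- mu * qf k D v + 512 * mu\<^sup>2 * s\<^sup>2))"
proof -
  interpret P: prob_space "mvnormal k D" by (rule prob)
  define \<sigma> where "\<sigma> = qf k D v"
  have s0: "0 \<le> \<sigma>" unfolding \<sigma>_def by (rule qf_nonneg)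
  define Y where "Y x = (\<Sum>i<k. v i * x i)" for x :: "nat \<Rightarrow> real"
  have [measurable]: "Y \<in> borel_measurable (mvnormal k D)" unfolding Y_def[abs_def] by (rule Y_meas_mvn)
  define \<beta> where "\<beta> = 1 / (8 * s)"
  have \<beta>: "\<beta> > 0" unfolding \<beta>_def using s by simp
  have bm: "2 * (\<beta> + mu) * \<sigma> \<le> 1/2"
  proof -
    have "\<beta> + mu \<le> 1/(4 * s)" using mu unfolding \<beta>_def by simp
    then have "(\<beta> + mu) * \<sigma> \<le> 1/(4 * s) * s" using s0 s \<sigma>_def mu \<beta>
      by (intro mult_mono) auto
    then have "(\<beta> + mu) * \<sigma> \<le> 1/4" using s by simp
    moreover have "2 * (\<beta> + mu) * \<sigma> = 2 * ((\<beta> + mu) * \<sigma>)" by simp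
    ultimately show ?thesis by linarith
  qed
  define c where "c = 4 * mu\<^sup>2 / \<beta>\<^sup>2"
  have c0: "0 \<le> c" unfolding c_def by simp
  have pw: "ennreal (exp (- mu * (Y x)\<^sup>2)) + ennreal (exp (mu * (Y x)\<^sup>2)) \<le> ennreal 2 + ennreal c * ennreal (exp ((\<beta> + mu) * (Y x)\<^sup>2))" for x
  proof -
    define u where "u = mu * (Y x)\<^sup>2"
    have u0: "0 \<le> u" unfolding u_def using mu by simp
    have "((\<beta> * (Y x)\<^sup>2))\<^sup>2 / 4 \<le> exp (\<beta> * (Y x)\<^sup>2)" by (rule R4) (use \<beta> in simp)
    then have y4: "((Y x)\<^sup>2)\<^sup>2 \<le> 4 / \<beta>\<^sup>2 * exp (\<beta> * (Y x)\<^sup>2)"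
      using \<beta> by (simp add: power_mult_distrib field_simps)
    have "exp (- u) + exp u \<le> 2 + u\<^sup>2 * exp u" by (rule R3[OF u0])
    also have "u\<^sup>2 * exp u = mu\<^sup>2 * ((Y x)\<^sup>2)\<^sup>2 * exp u" unfolding u_def by (simp add: power_mult_distrib)
    also have "\<dots> \<le> mu\<^sup>2 * (4 / \<beta>\<^sup>2 * exp (\<beta> * (Y x)\<^sup>2)) * exp u"
      using y4 by (intro mult_right_mono mult_left_mono) auto
    also have "\<dots> = c * exp ((\<beta> + mu) * (Y x)\<^sup>2)"
      unfolding c_def u_def by (simp add: exp_add[symmetric] algebra_simps)
    finally have "exp (- u) + exp u \<le> 2 + c * exp ((\<beta> + mu) * (Y x)\<^sup>2)" by simp
    then have "ennreal (exp (- u) + exp u) \<le> ennreal (2 + c * exp ((\<beta> + mu) * (Y x)\<^sup>2))"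
      by (rule ennreal_leI)
    then show ?thesis unfolding u_def using c0 by (simp add: ennreal_plus ennreal_mult)
  qed
  define A where "A = (\<integral>\<^sup>+x. ennreal (exp (- mu * (Y x)\<^sup>2)) \<partial>mvnormal k D)"
  have "mu * \<sigma> \<le> (\<beta> + mu) * \<sigma>" by (rule mult_right_mono) (use \<beta> s0 in auto)
  then have ml: "2 * mu * \<sigma> < 1" using bm by linarith
  have Ep: "(\<integral>\<^sup>+x. ennreal (exp (mu * (Y x)\<^sup>2)) \<partial>mvnormal k D) = ennreal (1 / sqrt (1 - 2*mu*\<sigma>))"
    unfolding Y_def \<sigma>_def by (intro mgf_sq) (use mu ml \<sigma>_def in auto)
  have Ebm: "(\<integral>\<^sup>+x. ennreal (exp ((\<beta> + mu) * (Y x)\<^sup>2)) \<partial>mvnormal k D) = ennreal (1 / sqrt (1 - 2*(\<beta> + mu)*\<sigma>))"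
    unfolding Y_def \<sigma>_def by (rule mgf_sq) (use mu bm \<beta> s0 \<sigma>_def in auto)
  have "A + ennreal (1 / sqrt (1 - 2*mu*\<sigma>)) = (\<integral>\<^sup>+x. ennreal (exp (- mu * (Y x)\<^sup>2)) + ennreal (exp (mu * (Y x)\<^sup>2)) \<partial>mvnormal k D)"
    unfolding A_def Ep[symmetric] by (rule nn_integral_add[symmetric]) measurable
  also have "\<dots> \<le> (\<integral>\<^sup>+x. ennreal 2 + ennreal c * ennreal (exp ((\<beta> + mu) * (Y x)\<^sup>2)) \<partial>mvnormal k D)"
    by (rule nn_integral_mono) (rule pw)
  also have "\<dots> = (\<integral>\<^sup>+x. ennreal 2 \<partial>mvnormal k D) + (\<integral>\<^sup>+x. ennreal c * ennreal (exp ((\<beta> + mu) * (Y x)\<^sup>2)) \<partial>mvnormal k D)"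
    by (rule nn_integral_add) measurable
  also have "(\<integral>\<^sup>+x. ennreal 2 \<partial>mvnormal k D) = ennreal 2" by (simp add: P.emeasure_space_1)
  also have "(\<integral>\<^sup>+x. ennreal c * ennreal (exp ((\<beta> + mu) * (Y x)\<^sup>2)) \<partial>mvnormal k D) = ennreal c * ennreal (1 / sqrt (1 - 2*(\<beta> + mu)*\<sigma>))"
    unfolding Ebm[symmetric] by (rule nn_integral_cmult) measurable
  also have "ennreal c * ennreal (1 / sqrt (1 - 2*(\<beta> + mu)*\<sigma>)) \<le> ennreal c * ennreal 2"
  proof (intro mult_left_mono ennreal_leI)
    have "1/2 \<le> 1 - 2*(\<beta> + mu)*\<sigma>" using bm by simp
    then have "sqrt (1/4) \<le> sqrt (1 - 2*(\<beta> + mu)*\<sigma>)" by (subst real_sqrt_le_iff) simp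
    then have z: "1/2 \<le> sqrt (1 - 2*(\<beta> + mu)*\<sigma>)" by (simp add: real_sqrt_divide)
    have "\<And>z::real. 1/2 \<le> z \<Longrightarrow> 1 / z \<le> 2"
    proof -
      fix z :: real assume "1/2 \<le> z"
      then have "0 < z" by simp
      then show "1 / z \<le> 2" using \<open>1/2 \<le> z\<close> by (simp add: field_simps)
    qed
    from this[OF z] show "1 / sqrt (1 - 2*(\<beta> + mu)*\<sigma>) \<le> 2" .
  qed simp
  also have "ennreal c * ennreal 2 = ennreal (c * 2)" by (rule ennreal_mult[symmetric]) (use c0 in auto)
  also have "ennreal 2 + ennreal (c * 2) = ennreal (2 + c * 2)" by (rule ennreal_plus[symmetric]) (use c0 in auto)
  also have "2 + c * 2 = 2 + 2 * c" by simp
  finally have le1: "A + ennreal (1 / sqrt (1 - 2*mu*\<sigma>)) \<le> ennreal (2 + 2 * c)" by simp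
  have m1: "1 + mu * \<sigma> \<le> 1 / sqrt (1 - 2*mu*\<sigma>)"
    using R2[of "2*mu*\<sigma>"] mu s0 ml by (auto simp: algebra_simps mult_nonneg_nonneg)
  have le2: "A + ennreal (1 + mu * \<sigma>) \<le> ennreal (2 + 2 * c)"
    using le1 m1 by (meson add_left_mono ennreal_leI order_trans)
  obtain r where r: "0 \<le> r" "A = ennreal r"
    using le2 by (cases A) (auto simp: top_unique)
  have rr: "ennreal (r + (1 + mu * \<sigma>)) \<le> ennreal (2 + 2 * c)"
    using le2 r mu s0 by (simp add: ennreal_plus)
  have "r + (1 + mu * \<sigma>) \<le> 2 + 2 * c" by (rule ennreal_le_iff[THEN iffD1, OF _ rr]) (use c0 in simp)
  then have "r \<le> 1 + (- mu * \<sigma> + 2 * c)" by simp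
  also have "\<dots> \<le> exp (- mu * \<sigma> + 2 * c)" by (rule exp_ge_add_one_self)
  also have "2 * c = 512 * mu\<^sup>2 * s\<^sup>2" unfolding c_def \<beta>_def using s by (simp add: power2_eq_square field_simps)
  finally have "A \<le> ennreal (exp (- mu * \<sigma> + 512 * mu\<^sup>2 * s\<^sup>2))" using r by (simp add: ennreal_leI)
  then show ?thesis unfolding A_def Y_def \<sigma>_def .
qed

end


context mvn begin

lemma sqY_meas: "(\<lambda>x. (\<Sum>j<k. v j * x j)\<^sup>2) \<in> borel_measurable (mvnormal k D)"
  using Y_meas_mvn[of v] by measurable

lemma tail_up:
  assumes s: "0 < s" "qf k D v \<le> s" and t: "0 < t" "t \<le> s"
  shows "emeasure (PiM {..<n} (\<lambda>_. mvnormal k D)) {w \<in> space (PiM {..<n} (\<lambda>_. mvnormal k D)).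
           real n * (qf k D v + t) \<le> (\<Sum>i<n. (\<Sum>j<k. v j * w i j)\<^sup>2)} \<le> ennreal (exp (- real n * t\<^sup>2 / (16 * s\<^sup>2)))"
proof -
  define \<sigma> where "\<sigma> = qf k D v"
  have s0: "0 \<le> \<sigma>" unfolding \<sigma>_def by (rule qf_nonneg)
  define l where "l = t / (8 * s\<^sup>2)"
  have l0: "0 \<le> l" unfolding l_def using t by simp
  have ls: "l * \<sigma> \<le> 1/4"
  proof -
    have "l * \<sigma> \<le> l * s" using s s0 l0 \<sigma>_def by (intro mult_left_mono) auto
    also have "l * s = t / (8 * s)" unfolding l_def using s by (simp add: power2_eq_square)
    also have "\<dots> \<le> 1/8" using t s by (simp add: field_simps)
    finally show ?thesis by simp
  qed
  have "emeasure (PiM {..<n} (\<lambda>_. mvnormal k D)) {w \<in> space (PiM {..<n} (\<lambda>_. mvnormal k D)).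
           real n * (\<sigma> + t) \<le> (\<Sum>i<n. (\<Sum>j<k. v j * w i j)\<^sup>2)}
      \<le> ennreal (exp (- l * (real n * (\<sigma> + t)))) * (\<integral>\<^sup>+x. ennreal (exp (l * (\<Sum>j<k. v j * x j)\<^sup>2)) \<partial>mvnormal k D) ^ n"
    by (rule chernoff[OF prob sqY_meas l0])
  also have "\<dots> \<le> ennreal (exp (- l * (real n * (\<sigma> + t)))) * ennreal (exp (l * \<sigma> + 4 * l\<^sup>2 * \<sigma>\<^sup>2)) ^ n"
    by (intro mult_left_mono power_mono) (use mgf_up[OF l0 ls[unfolded \<sigma>_def]] \<sigma>_def in auto)
  also have "\<dots> = ennreal (exp (- l * (real n * (\<sigma> + t)) + real n * (l * \<sigma> + 4 * l\<^sup>2 * \<sigma>\<^sup>2)))"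
    by (simp only: ennreal_power[OF exp_ge_zero] exp_of_nat_mult[symmetric] ennreal_mult[OF exp_ge_zero exp_ge_zero, symmetric] exp_add[symmetric])
  also have "\<dots> \<le> ennreal (exp (- real n * t\<^sup>2 / (16 * s\<^sup>2)))"
  proof (intro ennreal_leI exp_mono)
    have "- l * (real n * (\<sigma> + t)) + real n * (l * \<sigma> + 4 * l\<^sup>2 * \<sigma>\<^sup>2) = real n * (- l * t + 4 * l\<^sup>2 * \<sigma>\<^sup>2)"
      by (simp add: algebra_simps)
    also have "\<dots> \<le> real n * (- l * t + 4 * l\<^sup>2 * s\<^sup>2)"
      using s s0 \<sigma>_def by (intro mult_left_mono add_left_mono mult_left_mono power_mono) auto
    also have "- l * t + 4 * l\<^sup>2 * s\<^sup>2 = - t\<^sup>2 / (16 * s\<^sup>2)"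
      unfolding l_def using s by (simp add: power2_eq_square field_simps)
    finally show "- l * (real n * (\<sigma> + t)) + real n * (l * \<sigma> + 4 * l\<^sup>2 * \<sigma>\<^sup>2) \<le> - real n * t\<^sup>2 / (16 * s\<^sup>2)"
      by simp
  qed
  finally show ?thesis unfolding \<sigma>_def .
qed

lemma tail_low:
  assumes s: "0 < s" "qf k D v \<le> s" and t: "0 < t" "t \<le> s"
  shows "emeasure (PiM {..<n} (\<lambda>_. mvnormal k D)) {w \<in> space (PiM {..<n} (\<lambda>_. mvnormal k D)).
           (\<Sum>i<n. (\<Sum>j<k. v j * w i j)\<^sup>2) \<le> real n * (qf k D v - t)} \<le> ennreal (exp (- real n * t\<^sup>2 / (2048 * s\<^sup>2)))"
proof -
  define \<sigma> where "\<sigma> = qf k D v"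
  have s0: "0 \<le> \<sigma>" unfolding \<sigma>_def by (rule qf_nonneg)
  define l where "l = t / (1024 * s\<^sup>2)"
  have l0: "0 \<le> l" unfolding l_def using t by simp
  have l8: "l \<le> 1 / (8 * s)"
  proof -
    have "l = (t / s) / (1024 * s)" unfolding l_def using s by (simp add: power2_eq_square)
    also have "\<dots> \<le> 1 / (1024 * s)" using t s by (intro divide_right_mono) auto
    also have "\<dots> \<le> 1 / (8 * s)" using s by (intro divide_left_mono) auto
    finally show ?thesis .
  qed
  have fm: "(\<lambda>x. - (\<Sum>j<k. v j * x j)\<^sup>2) \<in> borel_measurable (mvnormal k D)"
    using sqY_meas[of v] by measurable
  have "{w \<in> space (PiM {..<n} (\<lambda>_. mvnormal k D)). (\<Sum>i<n. (\<Sum>j<k. v j * w i j)\<^sup>2) \<le> real n * (\<sigma> - t)}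
      = {w \<in> space (PiM {..<n} (\<lambda>_. mvnormal k D)). - (real n * (\<sigma> - t)) \<le> (\<Sum>i<n. - (\<Sum>j<k. v j * w i j)\<^sup>2)}"
    by (auto simp: sum_negf)
  have "emeasure (PiM {..<n} (\<lambda>_. mvnormal k D)) {w \<in> space (PiM {..<n} (\<lambda>_. mvnormal k D)).
           (\<Sum>i<n. (\<Sum>j<k. v j * w i j)\<^sup>2) \<le> real n * (\<sigma> - t)}
      \<le> ennreal (exp (- l * (- (real n * (\<sigma> - t))))) * (\<integral>\<^sup>+x. ennreal (exp (l * (- (\<Sum>j<k. v j * x j)\<^sup>2))) \<partial>mvnormal k D) ^ n"
    unfolding \<open>{w \<in> space (PiM {..<n} (\<lambda>_. mvnormal k D)). (\<Sum>i<n. (\<Sum>j<k. v j * w i j)\<^sup>2) \<le> real n * (\<sigma> - t)}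
      = {w \<in> space (PiM {..<n} (\<lambda>_. mvnormal k D)). - (real n * (\<sigma> - t)) \<le> (\<Sum>i<n. - (\<Sum>j<k. v j * w i j)\<^sup>2)}\<close>
    by (rule chernoff[OF prob fm l0])
  also have "(\<integral>\<^sup>+x. ennreal (exp (l * (- (\<Sum>j<k. v j * x j)\<^sup>2))) \<partial>mvnormal k D) = (\<integral>\<^sup>+x. ennreal (exp (- l * (\<Sum>j<k. v j * x j)\<^sup>2)) \<partial>mvnormal k D)"
    by simp
  also have "ennreal (exp (- l * (- (real n * (\<sigma> - t))))) * \<dots> ^ n \<le> ennreal (exp (- l * (- (real n * (\<sigma> - t))))) * ennreal (exp (- l * \<sigma> + 512 * l\<^sup>2 * s\<^sup>2)) ^ n"
    by (intro mult_left_mono power_mono) (use mgf_low[OF s l0 l8] \<sigma>_def in auto)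
  also have "\<dots> = ennreal (exp (- l * (- (real n * (\<sigma> - t))) + real n * (- l * \<sigma> + 512 * l\<^sup>2 * s\<^sup>2)))"
    by (simp only: ennreal_power[OF exp_ge_zero] exp_of_nat_mult[symmetric] ennreal_mult[OF exp_ge_zero exp_ge_zero, symmetric] exp_add[symmetric])
  also have "\<dots> \<le> ennreal (exp (- real n * t\<^sup>2 / (2048 * s\<^sup>2)))"
  proof (intro ennreal_leI exp_mono)
    have "- l * (- (real n * (\<sigma> - t))) + real n * (- l * \<sigma> + 512 * l\<^sup>2 * s\<^sup>2) = real n * (- l * t + 512 * l\<^sup>2 * s\<^sup>2)"
      by (simp add: algebra_simps)
    also have "- l * t + 512 * l\<^sup>2 * s\<^sup>2 = - t\<^sup>2 / (2048 * s\<^sup>2)"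
      unfolding l_def using s by (simp add: power2_eq_square field_simps)
    finally show "- l * (- (real n * (\<sigma> - t))) + real n * (- l * \<sigma> + 512 * l\<^sup>2 * s\<^sup>2) \<le> - real n * t\<^sup>2 / (2048 * s\<^sup>2)"
      by simp
  qed
  finally show ?thesis unfolding \<sigma>_def .
qed

end


definition nrm :: "ereal \<Rightarrow> nat \<Rightarrow> (nat \<Rightarrow> real) \<Rightarrow> real" where
  "nrm r k f = (if r = \<infinity> then Max (insert 0 ((\<lambda>i. \<bar>f i\<bar>) ` {..<k})) else L2_set f {..<k})"

lemma vnorm_nrm:
  assumes r: "r = 2 \<or> r = \<infinity>"
  shows "vnorm r x = nrm r (dim_vec x) (\<lambda>i. x $ i)"
proof (cases "r = \<infinity>")
  case True
  have "{\<bar>x $ i\<bar> | i. i < dim_vec x} = (\<lambda>i. \<bar>x$i\<bar>) ` {..<dim_vec x}" by auto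
  then show ?thesis using True unfolding vnorm_def nrm_def by simp
next
  case False
  then have r2: "r = 2" using r by simp
  have "\<bar>x $ i\<bar> powr 2 = (x $ i)\<^sup>2" for i
  proof (cases "x $ i = 0")
    case True then show ?thesis by simp
  next
    case False
    then have "\<bar>x $ i\<bar> powr real 2 = \<bar>x $ i\<bar> ^ 2" by (intro powr_realpow) simp
    then show ?thesis by simp
  qed
  then show ?thesis using r2 unfolding vnorm_def nrm_def L2_set_def
    by (simp add: powr_half_sqrt sum_nonneg)
qed

lemma nrm_cong: "(\<And>i. i < k \<Longrightarrow> f i = g i) \<Longrightarrow> nrm r k f = nrm r k g"
  unfolding nrm_def by (auto intro!: L2_set_cong image_cong)

lemma nrm_nonneg: "0 \<le> nrm r k f"
  unfolding nrm_def by (auto simp: L2_set_nonneg intro: Max_ge)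

lemma nrm_ge: "i < k \<Longrightarrow> \<bar>f i\<bar> \<le> nrm r k f"
proof -
  assume i: "i < k"
  show ?thesis
  proof (cases "r = \<infinity>")
    case True then show ?thesis unfolding nrm_def using i by (auto intro!: Max_ge)
  next
    case False
    have "\<bar>f i\<bar> = sqrt ((f i)\<^sup>2)" by simp
    also have "\<dots> \<le> sqrt (\<Sum>j<k. (f j)\<^sup>2)"
      using i by (intro real_sqrt_le_mono member_le_sum) auto
    finally show ?thesis using False unfolding nrm_def L2_set_def by simp
  qed
qed

lemma nrm_le_inf: "r = \<infinity> \<Longrightarrow> 0 \<le> B \<Longrightarrow> (\<And>i. i < k \<Longrightarrow> \<bar>f i\<bar> \<le> B) \<Longrightarrow> nrm r k f \<le> B"
  unfolding nrm_def by (auto simp: Max_le_iff)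

lemma nrm_add: "nrm r k (\<lambda>i. f i + g i) \<le> nrm r k f + nrm r k g"
proof (cases "r = \<infinity>")
  case True
  show ?thesis
  proof (rule nrm_le_inf[OF True])
    show "0 \<le> nrm r k f + nrm r k g" using nrm_nonneg by (simp add: add_nonneg_nonneg)
    fix i assume i: "i < k"
    have "\<bar>f i + g i\<bar> \<le> \<bar>f i\<bar> + \<bar>g i\<bar>" by (rule abs_triangle_ineq)
    also have "\<dots> \<le> nrm r k f + nrm r k g" using nrm_ge[OF i] by (intro add_mono)
    finally show "\<bar>f i + g i\<bar> \<le> nrm r k f + nrm r k g" .
  qed
next
  case False
  then show ?thesis unfolding nrm_def by (simp add: L2_set_triangle_ineq)
qed

lemma nrm_scale: "nrm r k (\<lambda>i. c * f i) = \<bar>c\<bar> * nrm r k f"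
proof (cases "r = \<infinity>")
  case True
  show ?thesis
  proof (rule antisym)
    show "nrm r k (\<lambda>i. c * f i) \<le> \<bar>c\<bar> * nrm r k f"
      by (rule nrm_le_inf[OF True]) (auto simp: abs_mult nrm_nonneg intro: mult_left_mono nrm_ge)
    show "\<bar>c\<bar> * nrm r k f \<le> nrm r k (\<lambda>i. c * f i)"
    proof (cases "c = 0")
      case True then show ?thesis by (simp add: nrm_nonneg)
    next
      case False
      have "nrm r k f \<le> nrm r k (\<lambda>i. c * f i) / \<bar>c\<bar>"
      proof (rule nrm_le_inf[OF True])
        show "0 \<le> nrm r k (\<lambda>i. c * f i) / \<bar>c\<bar>" by (simp add: nrm_nonneg)
        fix i assume "i < k"
        from nrm_ge[OF this, of "\<lambda>i. c * f i" r] have "\<bar>c\<bar> * \<bar>f i\<bar> \<le> nrm r k (\<lambda>i. c * f i)" by (simp add: abs_mult)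
        then show "\<bar>f i\<bar> \<le> nrm r k (\<lambda>i. c * f i) / \<bar>c\<bar>" using False by (simp add: field_simps)
      qed
      then show ?thesis using False by (simp add: field_simps)
    qed
  qed
next
  case False
  have "L2_set (\<lambda>i. c * f i) {..<k} = L2_set (\<lambda>i. \<bar>c\<bar> * f i) {..<k}"
    unfolding L2_set_def by (simp add: power_mult_distrib)
  also have "\<dots> = \<bar>c\<bar> * L2_set f {..<k}" by (rule L2_set_right_distrib[symmetric]) simp
  finally show ?thesis using False unfolding nrm_def by simp
qed

lemma nrm_mat:
  assumes A: "\<And>i j. i < k \<Longrightarrow> j < k \<Longrightarrow> \<bar>A i j\<bar> \<le> \<eta>" and e: "0 \<le> \<eta>"
  shows "nrm r k (\<lambda>i. \<Sum>j<k. A i j * y j) \<le> real k * \<eta> * nrm r k y"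
proof (cases "r = \<infinity>")
  case True
  show ?thesis
  proof (rule nrm_le_inf[OF True])
    show "0 \<le> real k * \<eta> * nrm r k y" using e by (simp add: nrm_nonneg)
    fix i assume i: "i < k"
    have "\<bar>\<Sum>j<k. A i j * y j\<bar> \<le> (\<Sum>j<k. \<bar>A i j\<bar> * \<bar>y j\<bar>)"
      by (rule order_trans[OF sum_abs]) (simp add: abs_mult)
    also have "\<dots> \<le> (\<Sum>j<k. \<eta> * nrm r k y)"
      using A i e by (intro sum_mono mult_mono nrm_ge) (auto simp: nrm_nonneg)
    also have "\<dots> = real k * \<eta> * nrm r k y" by simp
    finally show "\<bar>\<Sum>j<k. A i j * y j\<bar> \<le> real k * \<eta> * nrm r k y" .
  qed
next
  case False
  have row: "\<bar>\<Sum>j<k. A i j * y j\<bar> \<le> \<eta> * sqrt (real k) * L2_set y {..<k}" if i: "i < k" for i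
  proof -
    have "\<bar>\<Sum>j<k. A i j * y j\<bar> \<le> (\<Sum>j<k. \<bar>A i j\<bar> * \<bar>y j\<bar>)"
      by (rule order_trans[OF sum_abs]) (simp add: abs_mult)
    also have "\<dots> \<le> (\<Sum>j<k. \<eta> * \<bar>y j\<bar>)"
      using A i by (intro sum_mono mult_right_mono) auto
    also have "\<dots> = \<eta> * (\<Sum>j<k. \<bar>(\<lambda>_. 1::real) j\<bar> * \<bar>y j\<bar>)" by (simp add: sum_distrib_left)
    also have "\<dots> \<le> \<eta> * (L2_set (\<lambda>_. 1::real) {..<k} * L2_set y {..<k})"
      using e by (intro mult_left_mono L2_set_mult_ineq)
    also have "L2_set (\<lambda>_. 1::real) {..<k} = sqrt (real k)" unfolding L2_set_def by simp
    finally show ?thesis by (simp add: mult.assoc)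
  qed
  have "L2_set (\<lambda>i. \<Sum>j<k. A i j * y j) {..<k} = L2_set (\<lambda>i. \<bar>\<Sum>j<k. A i j * y j\<bar>) {..<k}"
    unfolding L2_set_def by simp
  also have "\<dots> \<le> L2_set (\<lambda>i. \<eta> * sqrt (real k) * L2_set y {..<k}) {..<k}"
    by (rule L2_set_mono) (use row in auto)
  also have "\<dots> = sqrt (real k) * (\<eta> * sqrt (real k) * L2_set y {..<k})"
    using e by (simp add: L2_set_def real_sqrt_mult power_mult_distrib sum_nonneg)
  also have "\<dots> = real k * \<eta> * L2_set y {..<k}" by (simp add: algebra_simps)
  finally show ?thesis using False unfolding nrm_def by simp
qed



lemma nrm_zero: "nrm r k (\<lambda>i. 0) = 0"
  using nrm_scale[of r k 0 "\<lambda>i. 0"] by simp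

lemma vnorm_mv:
  assumes r: "r = 2 \<or> r = \<infinity>" and A: "A \<in> carrier_mat k k" and y: "y \<in> carrier_vec k"
  shows "vnorm r (A *\<^sub>v y) = nrm r k (\<lambda>i. \<Sum>j<k. A$$(i,j) * y$j)"
proof -
  have "vnorm r (A *\<^sub>v y) = nrm r k (\<lambda>i. (A *\<^sub>v y) $ i)" using vnorm_nrm[OF r] A by simp
  also have "\<dots> = nrm r k (\<lambda>i. \<Sum>j<k. A$$(i,j) * y$j)"
    using A y by (intro nrm_cong) (auto simp: scalar_prod_def atLeast0LessThan)
  finally show ?thesis .
qed

lemma vnorm_v: "r = 2 \<or> r = \<infinity> \<Longrightarrow> y \<in> carrier_vec k \<Longrightarrow> vnorm r y = nrm r k (\<lambda>i. y$i)"
  using vnorm_nrm by auto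

lemma vnorm_zero_imp: "r = 2 \<or> r = \<infinity> \<Longrightarrow> y \<in> carrier_vec k \<Longrightarrow> vnorm r y \<le> 0 \<Longrightarrow> y = 0\<^sub>v k"
proof -
  assume r: "r = 2 \<or> r = \<infinity>" and y: "y \<in> carrier_vec k" and le: "vnorm r y \<le> 0"
  have "\<bar>y $ i\<bar> \<le> 0" if "i < k" for i
    using nrm_ge[OF that, of "\<lambda>i. y$i" r] le vnorm_v[OF r y] by simp
  then show ?thesis using y by (auto simp: vec_eq_iff)
qed

lemma opnorm_bound:
  assumes r: "r = 2 \<or> r = \<infinity>" and A: "A \<in> carrier_mat k k" and x: "x \<in> carrier_vec k"
  shows "vnorm r (A *\<^sub>v x) \<le> opnorm r A * vnorm r x"
proof -
  define V where "V = {vnorm r (A *\<^sub>v x) | x. x \<in> carrier_vec (dim_col A) \<and> vnorm r x = 1}"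
  have op: "opnorm r A = Sup V" unfolding opnorm_def V_def by simp
  define \<eta> where "\<eta> = (\<Sum>i<k. \<Sum>j<k. \<bar>A$$(i,j)\<bar>)"
  have eta: "\<bar>A$$(i,j)\<bar> \<le> \<eta>" if "i<k" "j<k" for i j
  proof -
    have "\<bar>A$$(i,j)\<bar> \<le> (\<Sum>j<k. \<bar>A$$(i,j)\<bar>)" using that by (intro member_le_sum) auto
    also have "\<dots> \<le> \<eta>" unfolding \<eta>_def using that by (intro member_le_sum) (auto intro: sum_nonneg)
    finally show ?thesis .
  qed
  have e0: "0 \<le> \<eta>" unfolding \<eta>_def by (intro sum_nonneg) auto
  have bd: "bdd_above V"
  proof (rule bdd_aboveI)
    fix z assume "z \<in> V"
    then obtain x where x: "x \<in> carrier_vec k" "vnorm r x = 1" "z = vnorm r (A *\<^sub>v x)" unfolding V_def using A by auto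
    have "z = nrm r k (\<lambda>i. \<Sum>j<k. A$$(i,j) * x$j)" using vnorm_mv[OF r A x(1)] x by simp
    also have "\<dots> \<le> real k * \<eta> * nrm r k (\<lambda>j. x$j)" by (rule nrm_mat[OF eta e0]) auto
    also have "nrm r k (\<lambda>j. x$j) = 1" using vnorm_v[OF r x(1)] x by simp
    finally show "z \<le> real k * \<eta>" by simp
  qed
  show ?thesis
  proof (cases "vnorm r x = 0")
    case True
    then have "x = 0\<^sub>v k" using vnorm_zero_imp[OF r x] by simp
    then have "vnorm r (A *\<^sub>v x) = nrm r k (\<lambda>i. \<Sum>j<k. A$$(i,j) * (0\<^sub>v k :: real vec)$j)"
      using vnorm_mv[OF r A x] by simp
    also have "\<dots> = nrm r k (\<lambda>i. 0)" by (intro nrm_cong) simp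
    also have "\<dots> = 0" by (rule nrm_zero)
    finally show ?thesis using True by simp
  next
    case False
    define c where "c = vnorm r x"
    have c: "c > 0" using False nrm_nonneg vnorm_v[OF r x] unfolding c_def by (metis less_eq_real_def)
    define x' where "x' = (1/c) \<cdot>\<^sub>v x"
    have x': "x' \<in> carrier_vec k" unfolding x'_def using x by simp
    have "vnorm r x' = nrm r k (\<lambda>i. (1/c) * x$i)" using vnorm_v[OF r x'] x unfolding x'_def
      by (simp cong: nrm_cong)
    also have "\<dots> = (1/c) * c" unfolding nrm_scale c_def vnorm_v[OF r x] using c by (simp add: nrm_nonneg)
    finally have x'1: "vnorm r x' = 1" using c by simp
    have "vnorm r (A *\<^sub>v x') = nrm r k (\<lambda>i. (1/c) * (\<Sum>j<k. A$$(i,j) * x$j))"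
      unfolding vnorm_mv[OF r A x'] using x unfolding x'_def
      by (intro nrm_cong) (simp add: sum_distrib_left algebra_simps)
    also have "\<dots> = (1/c) * vnorm r (A *\<^sub>v x)" unfolding nrm_scale vnorm_mv[OF r A x] using c by simp
    finally have "(1/c) * vnorm r (A *\<^sub>v x) \<in> V" unfolding V_def using x' x'1 A by force
    then have "(1/c) * vnorm r (A *\<^sub>v x) \<le> Sup V" by (rule cSup_upper[OF _ bd])
    then show ?thesis unfolding op c_def[symmetric] using c by (simp add: field_simps)
  qed
qed

lemma unit_vnorm: "r = 2 \<or> r = \<infinity> \<Longrightarrow> k \<ge> 1 \<Longrightarrow> vnorm r (unit_vec k 0) = 1"
proof -
  assume r: "r = 2 \<or> r = \<infinity>" and k: "k \<ge> 1"
  have "vnorm r (unit_vec k 0) = nrm r k (\<lambda>i. if i = 0 then 1 else 0)"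
    using vnorm_v[OF r, of "unit_vec k 0" k] k by (auto intro!: nrm_cong simp: unit_vec_def)
  also have "\<dots> = 1"
  proof (cases "r = \<infinity>")
    case True
    have "nrm r k (\<lambda>i. if i = 0 then 1 else 0::real) \<le> 1" by (rule nrm_le_inf[OF True]) auto
    moreover have "\<bar>(\<lambda>i. if i = 0 then 1 else 0::real) 0\<bar> \<le> nrm r k (\<lambda>i. if i = 0 then 1 else 0)"
      using nrm_ge[of 0 k "\<lambda>i. if i = 0 then 1 else 0::real" r] k by simp
    ultimately show ?thesis by simp
  next
    case False
    have "(\<Sum>i<k. (if i = 0 then 1 else 0::real)\<^sup>2) = (\<Sum>i<k. if i = 0 then 1 else 0)"
      by (intro sum.cong) auto
    also have "\<dots> = 1" using k by simp
    finally show ?thesis using False unfolding nrm_def L2_set_def by simp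
  qed
  finally show ?thesis .
qed

lemma opnorm_le:
  assumes r: "r = 2 \<or> r = \<infinity>" and k: "k \<ge> 1" and A: "A \<in> carrier_mat k k"
    and B: "\<And>x. x \<in> carrier_vec k \<Longrightarrow> vnorm r x = 1 \<Longrightarrow> vnorm r (A *\<^sub>v x) \<le> B"
  shows "opnorm r A \<le> B"
  unfolding opnorm_def
proof (rule cSup_least)
  show "{vnorm r (A *\<^sub>v x) |x. x \<in> carrier_vec (dim_col A) \<and> vnorm r x = 1} \<noteq> {}"
    using unit_vnorm[OF r k] A unit_vec_carrier[of k 0] by blast
  show "z \<le> B" if "z \<in> {vnorm r (A *\<^sub>v x) |x. x \<in> carrier_vec (dim_col A) \<and> vnorm r x = 1}" for z
    using that A B by auto
qed



lemma det_main:
  assumes r: "r = 2 \<or> r = \<infinity>" and K: "K > 0" and MK: "M > K" and k: "k \<ge> 1"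
    and D: "D \<in> carrier_mat k k" and Di: "Di \<in> carrier_mat k k" and DiD: "Di * D = 1\<^sub>m k"
    and nDi: "opnorm r Di \<le> K" and S: "S \<in> carrier_mat k k" and e0: "0 \<le> \<eta>"
    and SD: "\<And>a b. a < k \<Longrightarrow> b < k \<Longrightarrow> \<bar>S$$(a,b) - D$$(a,b)\<bar> \<le> \<eta>"
    and small: "real k * \<eta> * K \<le> (M - K) / (2 * M)"
  shows "case mat_inverse S of None \<Rightarrow> False | Some Sv \<Rightarrow> opnorm r Sv < M"
proof -
  define \<gamma> where "\<gamma> = 1 - K * (real k * \<eta>)"
  have M0: "M > 0" using K MK by simp
  have g: "\<gamma> \<ge> (M + K) / (2 * M)"
  proof -
    have "(M - K) / (2 * M) = 1 - (M + K) / (2 * M)" using M0 by (simp add: field_simps)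
    then show ?thesis using small unfolding \<gamma>_def by (simp add: algebra_simps)
  qed
  have g0: "\<gamma> > 0" using g M0 K by (smt (verit) divide_pos_pos)
  have key: "\<gamma> * vnorm r y \<le> K * vnorm r (S *\<^sub>v y)" if y: "y \<in> carrier_vec k" for y
  proof -
    have Dy: "D *\<^sub>v y \<in> carrier_vec k" using D y by simp
    have "y = Di *\<^sub>v (D *\<^sub>v y)"
      using assoc_mult_mat_vec[OF Di D y] DiD y by simp
    then have "vnorm r y = vnorm r (Di *\<^sub>v (D *\<^sub>v y))" by simp
    also have "\<dots> \<le> opnorm r Di * vnorm r (D *\<^sub>v y)" by (rule opnorm_bound[OF r Di Dy])
    also have "\<dots> \<le> K * vnorm r (D *\<^sub>v y)"
      using nDi vnorm_v[OF r Dy] nrm_nonneg by (intro mult_right_mono) auto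
    also have "vnorm r (D *\<^sub>v y) \<le> vnorm r (S *\<^sub>v y) + real k * \<eta> * vnorm r y"
    proof -
      have "vnorm r (D *\<^sub>v y) = nrm r k (\<lambda>i. (\<Sum>j<k. S$$(i,j) * y$j) + (\<Sum>j<k. (D$$(i,j) - S$$(i,j)) * y$j))"
        unfolding vnorm_mv[OF r D y] by (intro nrm_cong) (simp add: sum.distrib[symmetric] algebra_simps)
      also have "\<dots> \<le> nrm r k (\<lambda>i. \<Sum>j<k. S$$(i,j) * y$j) + nrm r k (\<lambda>i. \<Sum>j<k. (D$$(i,j) - S$$(i,j)) * y$j)"
        by (rule nrm_add)
      also have "nrm r k (\<lambda>i. \<Sum>j<k. (D$$(i,j) - S$$(i,j)) * y$j) \<le> real k * \<eta> * nrm r k (\<lambda>j. y$j)"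
        by (rule nrm_mat[OF _ e0]) (use SD in \<open>auto simp: abs_minus_commute\<close>)
      finally show ?thesis unfolding vnorm_mv[OF r S y] vnorm_v[OF r y] by simp
    qed
    then have "K * vnorm r (D *\<^sub>v y) \<le> K * (vnorm r (S *\<^sub>v y) + real k * \<eta> * vnorm r y)"
      using K by (intro mult_left_mono) auto
    finally have "vnorm r y \<le> K * vnorm r (S *\<^sub>v y) + K * (real k * \<eta>) * vnorm r y"
      by (simp add: algebra_simps)
    then show ?thesis unfolding \<gamma>_def by (simp add: algebra_simps)
  qed
  show ?thesis
  proof (cases "mat_inverse S")
    case None
    have "det S = 0" using mat_inverse(1)[OF S None, where b="()"] det_non_zero_imp_unit[OF S, where b="()"] by blast
    then obtain y where y: "y \<in> carrier_vec k" "y \<noteq> 0\<^sub>v k" "S *\<^sub>v y = 0\<^sub>v k"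
      using det_0_iff_vec_prod_zero[OF S] by blast
    have "vnorm r (0\<^sub>v k :: real vec) = nrm r k (\<lambda>i. (0\<^sub>v k :: real vec) $ i)" by (rule vnorm_v[OF r]) simp
    also have "\<dots> = nrm r k (\<lambda>i. 0)" by (rule nrm_cong) simp
    also have "\<dots> = 0" by (rule nrm_zero)
    finally have "vnorm r (S *\<^sub>v y) = 0" using y(3) by simp
    then have "\<gamma> * vnorm r y \<le> 0" using key[OF y(1)] by simp
    then have "vnorm r y \<le> 0" using g0 by (simp add: mult_le_0_iff)
    then have "y = 0\<^sub>v k" by (rule vnorm_zero_imp[OF r y(1)])
    then show ?thesis using y(2) by simp
  next
    case (Some Sv)
    have Sv: "S * Sv = 1\<^sub>m k" "Sv \<in> carrier_mat k k" using mat_inverse(2)[OF S Some] by auto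
    have "opnorm r Sv \<le> K / \<gamma>"
    proof (rule opnorm_le[OF r k Sv(2)])
      fix x :: "real vec" assume x: "x \<in> carrier_vec k" "vnorm r x = 1"
      have yc: "Sv *\<^sub>v x \<in> carrier_vec k" using Sv x by simp
      have "S *\<^sub>v (Sv *\<^sub>v x) = x" using assoc_mult_mat_vec[OF S Sv(2) x(1), symmetric] Sv x by simp
      then have "\<gamma> * vnorm r (Sv *\<^sub>v x) \<le> K" using key[OF yc] x by simp
      then show "vnorm r (Sv *\<^sub>v x) \<le> K / \<gamma>" using g0 by (simp add: field_simps)
    qed
    also have "K / \<gamma> < M"
    proof -
      have "M * ((M + K) / (2 * M)) \<le> M * \<gamma>" using g M0 by (intro mult_left_mono) auto
      moreover have "M * ((M + K) / (2 * M)) = (M + K) / 2" using M0 by simp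
      ultimately have "K < M * \<gamma>" using MK by simp
      then show ?thesis using g0 by (simp add: field_simps)
    qed
    finally show ?thesis using Some by simp
  qed
qed



lemma lin_eval:
  fixes a b k :: nat
  assumes "a < k" "b < k"
  shows "(\<Sum>j<k. ((if j = a then 1 else 0) + \<epsilon> * (if j = b then 1 else 0)) * x j) = x a + \<epsilon> * (x b :: real)"
proof -
  have "(\<Sum>j<k. ((if j = a then 1 else 0) + \<epsilon> * (if j = b then 1 else 0)) * x j)
      = (\<Sum>j<k. (if j = a then x j else 0) + (if j = b then \<epsilon> * x j else 0))"
    by (intro sum.cong) (auto simp: algebra_simps)
  also have "\<dots> = (\<Sum>j<k. (if j = a then x j else 0)) + (\<Sum>j<k. (if j = b then \<epsilon> * x j else 0))"
    by (rule sum.distrib)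
  also have "\<dots> = x a + \<epsilon> * x b" using assms by (simp add: sum.delta)
  finally show ?thesis .
qed

lemma qf_eval:
  assumes "a < k" "b < k"
  shows "qf k D (\<lambda>j. (if j = a then 1 else 0) + \<epsilon> * (if j = b then 1 else 0))
       = D$$(a,a) + \<epsilon> * D$$(a,b) + \<epsilon> * (D$$(b,a) + \<epsilon> * D$$(b,b))"
proof -
  define v where "v = (\<lambda>j. (if j = a then 1 else 0) + \<epsilon> * (if j = b then 1 else (0::real)))"
  have "qf k D v = (\<Sum>i<k. v i * (\<Sum>j<k. v j * D$$(i,j)))"
    unfolding qf_def by (simp add: sum_distrib_left mult_ac)
  also have "\<dots> = (\<Sum>i<k. v i * (D$$(i,a) + \<epsilon> * D$$(i,b)))"
    unfolding v_def using lin_eval[OF assms] by simp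
  also have "\<dots> = (D$$(a,a) + \<epsilon> * D$$(a,b)) + \<epsilon> * (D$$(b,a) + \<epsilon> * D$$(b,b))"
    unfolding v_def by (rule lin_eval[OF assms])
  finally show ?thesis unfolding v_def by simp
qed

lemma unit_vnorm_j: "r = 2 \<or> r = \<infinity> \<Longrightarrow> j < k \<Longrightarrow> vnorm r (unit_vec k j) = 1"
proof -
  assume r: "r = 2 \<or> r = \<infinity>" and k: "j < k"
  have "vnorm r (unit_vec k j) = nrm r k (\<lambda>i. if i = j then 1 else 0)"
    using vnorm_v[OF r, of "unit_vec k j" k] k by (auto intro!: nrm_cong simp: unit_vec_def)
  also have "\<dots> = 1"
  proof (cases "r = \<infinity>")
    case True
    have "nrm r k (\<lambda>i. if i = j then 1 else 0::real) \<le> 1" by (rule nrm_le_inf[OF True]) auto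
    moreover have "\<bar>(\<lambda>i. if i = j then 1 else 0::real) j\<bar> \<le> nrm r k (\<lambda>i. if i = j then 1 else 0)"
      using nrm_ge[of j k "\<lambda>i. if i = j then 1 else 0::real" r] k by simp
    ultimately show ?thesis by simp
  next
    case False
    have "(\<Sum>i<k. (if i = j then 1 else 0::real)\<^sup>2) = (\<Sum>i<k. if i = j then 1 else 0)"
      by (intro sum.cong) auto
    also have "\<dots> = 1" using k by simp
    finally show ?thesis using False unfolding nrm_def L2_set_def by simp
  qed
  finally show ?thesis .
qed

lemma entry_bound:
  fixes D :: "real mat"
  assumes r: "r = 2 \<or> r = \<infinity>" and D: "D \<in> carrier_mat k k" and nD: "opnorm r D \<le> K"
    and ij: "i < k" "j < k"
  shows "\<bar>D$$(i,j)\<bar> \<le> K"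
proof -
  define x where "x = (unit_vec k j :: real vec)"
  have x: "x \<in> carrier_vec k" unfolding x_def by simp
  have "vnorm r (D *\<^sub>v x) = nrm r k (\<lambda>i. \<Sum>l<k. D$$(i,l) * x$l)" by (rule vnorm_mv[OF r D x])
  also have "\<dots> = nrm r k (\<lambda>i. D$$(i,j))"
    using ij unfolding x_def by (intro nrm_cong) (simp add: unit_vec_def if_distrib cong: if_cong)
  finally have e: "vnorm r (D *\<^sub>v x) = nrm r k (\<lambda>i. D$$(i,j))" .
  have "\<bar>D$$(i,j)\<bar> \<le> nrm r k (\<lambda>i. D$$(i,j))" using nrm_ge[OF ij(1), of "\<lambda>i. D$$(i,j)" r] by simp
  also have "\<dots> \<le> opnorm r D * vnorm r x" unfolding e[symmetric] by (rule opnorm_bound[OF r D x])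
  also have "vnorm r x = 1" unfolding x_def by (rule unit_vnorm_j[OF r ij(2)])
  finally show ?thesis using nD by simp
qed

context mvn begin

lemma T_meas: "(\<lambda>w. \<Sum>i<n. (\<Sum>j<k. v j * w i j)\<^sup>2) \<in> borel_measurable (PiM {..<n} (\<lambda>_. mvnormal k D))"
proof (rule borel_measurable_sum)
  fix i assume "i \<in> {..<n}"
  then show "(\<lambda>w. (\<Sum>j<k. v j * w i j)\<^sup>2) \<in> borel_measurable (PiM {..<n} (\<lambda>_. mvnormal k D))"
    using measurable_compose[OF measurable_component_singleton[of i "{..<n}" "\<lambda>_. mvnormal k D"] sqY_meas[of v]]
    by simp
qed

end



lemma aux4: "(x::real) = 4 * y \<Longrightarrow> x < 2 * z \<Longrightarrow> y < z / 2" by linarith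

theorem lemmaA4:
  fixes K M :: real and r :: ereal
  assumes "K > 0" and "r = 2 \<or> r = \<infinity>" and "M > K"
  shows "\<exists>M' m. M' > 0 \<and> m > 0 \<and>
    (\<forall>n k D. n \<ge> 1 \<longrightarrow> k \<ge> 1 \<longrightarrow> sym_posdef k D \<longrightarrow>
       (case mat_inverse D of None \<Rightarrow> False
          | Some Di \<Rightarrow> max (opnorm r Di) (opnorm r D) \<le> K) \<longrightarrow>
       measure (iid_mvnormal n k D) (bad_event r M n k \<inter> space (iid_mvnormal n k D))
         \<le> M' * real k ^ 2 * exp (- m * real n / real k ^ 2))"
proof -
  note K = assms(1) and r = assms(2) and MK = assms(3)
  have M0: "M > 0" using K MK by simp
  define \<delta> where "\<delta> = min ((M - K) / (2 * K * M)) (2 * K)"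
  have d1: "0 < (M - K) / (2 * K * M)" using K MK M0 by (intro divide_pos_pos) auto
  have \<delta>0: "\<delta> > 0" unfolding \<delta>_def using d1 K by simp
  have \<delta>2: "\<delta> \<le> 2 * K" unfolding \<delta>_def by simp
  have \<delta>K: "\<delta> * K \<le> (M - K) / (2 * M)"
  proof -
    have "\<delta> * K \<le> (M - K) / (2 * K * M) * K" unfolding \<delta>_def using K by (intro mult_right_mono) auto
    also have "\<dots> = (M - K) / (2 * M)" using K M0 by (simp add: field_simps)
    finally show ?thesis .
  qed
  define m where "m = \<delta>\<^sup>2 / (8192 * K\<^sup>2)"
  have m0: "m > 0" unfolding m_def using \<delta>0 K by simp
  show ?thesis
  proof (rule exI[of _ "4::real"], rule exI[of _ m], intro conjI allI impI)
    show "(4::real) > 0" by simp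
    show "m > 0" by (rule m0)
    fix n k :: nat and D :: "real mat"
    assume n: "1 \<le> n" and k: "1 \<le> k" and sp: "sym_posdef k D"
      and cs: "case mat_inverse D of None \<Rightarrow> False | Some Di \<Rightarrow> max (opnorm r Di) (opnorm r D) \<le> K"
    obtain Di where inv: "mat_inverse D = Some Di" using cs by (cases "mat_inverse D") auto
    have nDi: "opnorm r Di \<le> K" and nD: "opnorm r D \<le> K" using cs inv by auto
    interpret mvn k D Di by unfold_locales (rule sp, rule inv)
    define P where "P = PiM {..<n} (\<lambda>_. mvnormal k D)"
    have Peq: "iid_mvnormal n k D = P" unfolding P_def iid_mvnormal_def ..
    interpret PP: prob_space P unfolding P_def by (intro prob_space_PiM prob)
    define s where "s = 4 * K"
    define t where "t = 2 * \<delta> / real k"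
    define \<eta> where "\<eta> = \<delta> / real k"
    define vv where "vv a b \<epsilon> = (\<lambda>j. (if j = a then 1 else 0) + \<epsilon> * (if j = b then 1 else (0::real)))" for a b :: nat and \<epsilon> :: real
    define T where "T a b \<epsilon> w = (\<Sum>i<n. (\<Sum>j<k. vv a b \<epsilon> j * w i j)\<^sup>2)" for a b \<epsilon> and w :: "nat \<Rightarrow> nat \<Rightarrow> real"
    define \<sigma> where "\<sigma> a b \<epsilon> = qf k D (vv a b \<epsilon>)" for a b \<epsilon>
    define A where "A = (\<lambda>(a,b,\<epsilon>,u). if u then {w \<in> space P. real n * (\<sigma> a b \<epsilon> + t) \<le> T a b \<epsilon> w}
                       else {w \<in> space P. T a b \<epsilon> w \<le> real n * (\<sigma> a b \<epsilon> - t)})"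
    define I where "I = {..<k} \<times> {..<k} \<times> {1, -1::real} \<times> (UNIV :: bool set)"
    have kpos: "real k > 0" using k by simp
    have npos: "real n > 0" using n by simp
    have t0: "0 < t" unfolding t_def using \<delta>0 kpos by simp
    have ts: "t \<le> s"
    proof -
      have "t \<le> 2 * \<delta>" unfolding t_def using \<delta>0 k by (simp add: field_simps)
      then show ?thesis unfolding s_def using \<delta>2 by simp
    qed
    have s0: "0 < s" unfolding s_def using K by simp
    have fin: "finite I" unfolding I_def by simp
    have Tm: "(\<lambda>w. T a b \<epsilon> w) \<in> borel_measurable P" for a b \<epsilon>
      unfolding T_def P_def by (rule T_meas)
    have Isets: "A ` I \<subseteq> sets P"
    proof (rule image_subsetI)
      fix x assume "x \<in> I"
      obtain a b \<epsilon> u where x: "x = (a,b,\<epsilon>,u)" by (cases x) auto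
      note [measurable] = Tm[of a b \<epsilon>]
      have 1: "{w \<in> space P. real n * (\<sigma> a b \<epsilon> + t) \<le> T a b \<epsilon> w} \<in> sets P" by measurable
      have 2: "{w \<in> space P. T a b \<epsilon> w \<le> real n * (\<sigma> a b \<epsilon> - t)} \<in> sets P" by measurable
      show "A x \<in> sets P" unfolding x A_def using 1 2 by (cases u) auto
    qed
    have Dbound: "\<bar>D$$(i,j)\<bar> \<le> K" if "i < k" "j < k" for i j
      by (rule entry_bound[OF r Dc nD that])
    have sig_s: "\<sigma> a b \<epsilon> \<le> s" if ab: "a < k" "b < k" and e: "\<epsilon> \<in> {1, -1}" for a b \<epsilon>
    proof -
      have q: "\<sigma> a b \<epsilon> = D$$(a,a) + \<epsilon> * D$$(a,b) + \<epsilon> * (D$$(b,a) + \<epsilon> * D$$(b,b))"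
        unfolding \<sigma>_def vv_def by (rule qf_eval[OF ab])
      have b1: "D$$(a,a) \<le> K" "D$$(a,b) \<le> K" "D$$(b,a) \<le> K" "D$$(b,b) \<le> K"
        using Dbound[of a a] Dbound[of a b] Dbound[of b a] Dbound[of b b] ab by auto
      have b2: "- D$$(a,b) \<le> K" "- D$$(b,a) \<le> K"
        using Dbound[of a b] Dbound[of b a] ab by auto
      show ?thesis using e
      proof
        assume "\<epsilon> = 1" then show ?thesis unfolding q s_def using b1 by simp
      next
        assume "\<epsilon> \<in> {-1}" then show ?thesis unfolding q s_def using b1 b2 by simp
      qed
    qed
    have expmono: "exp (- real n * t\<^sup>2 / (c * s\<^sup>2)) \<le> exp (- real n * t\<^sup>2 / (2048 * s\<^sup>2))" if c: "0 < c" "c \<le> 2048" for c :: real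
    proof -
      have "real n * t\<^sup>2 / (2048 * s\<^sup>2) \<le> real n * t\<^sup>2 / (c * s\<^sup>2)"
        using c s0 npos by (intro divide_left_mono mult_right_mono mult_pos_pos) auto
      then show ?thesis by simp
    qed
    have Ibound: "emeasure P (A x) \<le> ennreal (exp (- real n * t\<^sup>2 / (2048 * s\<^sup>2)))" if "x \<in> I" for x
    proof -
      obtain a b \<epsilon> u where x: "x = (a,b,\<epsilon>,u)" by (cases x) auto
      have ab: "a < k" "b < k" and e: "\<epsilon> \<in> {1, -1}" using that unfolding x I_def by auto
      have ss: "qf k D (vv a b \<epsilon>) \<le> s" using sig_s[OF ab e] unfolding \<sigma>_def .
      show ?thesis
      proof (cases u)
        case True
        have "emeasure P (A x) \<le> ennreal (exp (- real n * t\<^sup>2 / (16 * s\<^sup>2)))"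
          unfolding x A_def P_def T_def \<sigma>_def using True tail_up[OF s0 ss t0 ts, of n] by simp
        also have "\<dots> \<le> ennreal (exp (- real n * t\<^sup>2 / (2048 * s\<^sup>2)))"
          by (rule ennreal_leI, rule expmono) auto
        finally show ?thesis .
      next
        case False
        show ?thesis
          unfolding x A_def P_def T_def \<sigma>_def using False tail_low[OF s0 ss t0 ts, of n] by simp
      qed
    qed
    have incl: "bad_event r M n k \<inter> space P \<subseteq> (\<Union>x\<in>I. A x)"
    proof
      fix w assume wb: "w \<in> bad_event r M n k \<inter> space P"
      show "w \<in> (\<Union>x\<in>I. A x)"
      proof (rule ccontr)
        assume nw: "w \<notin> (\<Union>x\<in>I. A x)"
        have wsp: "w \<in> space P" using wb by auto
        have Tb: "real n * (\<sigma> a b \<epsilon> - t) < T a b \<epsilon> w \<and> T a b \<epsilon> w < real n * (\<sigma> a b \<epsilon> + t)"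
          if "a < k" "b < k" "\<epsilon> \<in> {1, -1}" for a b \<epsilon>
        proof -
          have "(a,b,\<epsilon>,True) \<in> I" "(a,b,\<epsilon>,False) \<in> I" using that unfolding I_def by auto
          then have "w \<notin> A (a,b,\<epsilon>,True)" "w \<notin> A (a,b,\<epsilon>,False)" using nw by blast+
          then show ?thesis using wsp unfolding A_def by auto
        qed
        define S where "S = sample_cov n k w"
        have Sc: "S \<in> carrier_mat k k" unfolding S_def sample_cov_def by simp
        have SD: "\<bar>S$$(a,b) - D$$(a,b)\<bar> \<le> \<eta>" if ab: "a < k" "b < k" for a b
        proof -
          define X where "X = (\<Sum>i<n. w i a * w i b)"
          have Sab: "S$$(a,b) = X / real n" unfolding S_def sample_cov_def X_def using ab by simp
          have Te: "T a b \<epsilon> w = (\<Sum>i<n. (w i a + \<epsilon> * w i b)\<^sup>2)" for \<epsilon>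
            unfolding T_def vv_def using lin_eval[OF ab] by simp
          have TT: "T a b 1 w - T a b (-1) w = 4 * X"
          proof -
            have "T a b 1 w - T a b (-1) w = (\<Sum>i<n. (w i a + 1 * w i b)\<^sup>2 - (w i a + (-1) * w i b)\<^sup>2)"
              unfolding Te by (rule sum_subtractf[symmetric])
            also have "\<dots> = (\<Sum>i<n. 4 * (w i a * w i b))"
              by (intro sum.cong) (auto simp: power2_eq_square algebra_simps)
            finally show ?thesis unfolding X_def by (simp add: sum_distrib_left)
          qed
          have ss: "\<sigma> a b 1 - \<sigma> a b (-1) = 4 * D$$(a,b)"
            unfolding \<sigma>_def vv_def qf_eval[OF ab] using Dsym[OF ab] by simp
          have t1: "real n * (\<sigma> a b 1 - t) < T a b 1 w" "T a b 1 w < real n * (\<sigma> a b 1 + t)"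
            using Tb[OF ab, of 1] by auto
          have t2: "real n * (\<sigma> a b (-1) - t) < T a b (-1) w" "T a b (-1) w < real n * (\<sigma> a b (-1) + t)"
            using Tb[OF ab, of "-1"] by auto
          have "\<bar>(T a b 1 w - T a b (-1) w) - real n * (\<sigma> a b 1 - \<sigma> a b (-1))\<bar> < 2 * (real n * t)"
            using t1 t2 by (simp add: algebra_simps abs_less_iff)
          then have H: "\<bar>4 * X - real n * (4 * D$$(a,b))\<bar> < 2 * (real n * t)" unfolding TT ss .
          have E4: "4 * X - real n * (4 * D$$(a,b)) = 4 * (X - real n * D$$(a,b))" by (simp add: algebra_simps)
          have H2: "\<bar>4 * (X - real n * D$$(a,b))\<bar> < 2 * (real n * t)" using H unfolding E4 .
          have "\<bar>4 * (X - real n * D$$(a,b))\<bar> = 4 * \<bar>X - real n * D$$(a,b)\<bar>" by (subst abs_mult) simp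
          then have xb: "\<bar>X - real n * D$$(a,b)\<bar> < real n * t / 2" using H2 by (rule aux4)
          have "S$$(a,b) - D$$(a,b) = (X - real n * D$$(a,b)) / real n" unfolding Sab using npos by (simp add: field_simps)
          then have "\<bar>S$$(a,b) - D$$(a,b)\<bar> = \<bar>X - real n * D$$(a,b)\<bar> / real n" using npos by simp
          also have "\<dots> \<le> (real n * t / 2) / real n" using xb npos by (intro divide_right_mono) auto
          also have "\<dots> = \<eta>" unfolding \<eta>_def t_def using npos by simp
          finally show ?thesis .
        qed
        have \<eta>0: "0 \<le> \<eta>" unfolding \<eta>_def using \<delta>0 by simp
        have small: "real k * \<eta> * K \<le> (M - K) / (2 * M)"
          unfolding \<eta>_def using kpos \<delta>K by simp
        have dm: "case mat_inverse S of None \<Rightarrow> False | Some Sv \<Rightarrow> opnorm r Sv < M"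
          by (rule det_main[OF r K MK k Dc Dic inv_props(2) nDi Sc \<eta>0 SD small])
        have "w \<in> bad_event r M n k" using wb by auto
        then show False using dm unfolding bad_event_def S_def
          by (cases "mat_inverse (sample_cov n k w)") auto
      qed
    qed
    have cardI: "card I = 4 * k\<^sup>2" unfolding I_def by (simp add: card_cartesian_product power2_eq_square)
    define B where "B = exp (- real n * t\<^sup>2 / (2048 * s\<^sup>2))"
    have "emeasure P (bad_event r M n k \<inter> space P) \<le> emeasure P (\<Union>x\<in>I. A x)"
      by (rule emeasure_mono[OF incl sets.finite_UN[OF fin]]) (use Isets in auto)
    also have "\<dots> \<le> (\<Sum>x\<in>I. emeasure P (A x))" by (rule emeasure_subadditive_finite[OF fin Isets])
    also have "\<dots> \<le> (\<Sum>x\<in>I. ennreal B)" unfolding B_def by (rule sum_mono) (rule Ibound)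
    also have "\<dots> = ennreal (real (4 * k\<^sup>2) * B)"
      unfolding sum_constant cardI B_def by (simp add: ennreal_of_nat_eq_real_of_nat ennreal_mult)
    finally have em: "emeasure P (bad_event r M n k \<inter> space P) \<le> ennreal (real (4 * k\<^sup>2) * B)" .
    have "measure P (bad_event r M n k \<inter> space P) \<le> real (4 * k\<^sup>2) * B"
      using em PP.emeasure_eq_measure B_def by (simp add: ennreal_le_iff)
    also have "B = exp (- m * real n / real k ^ 2)"
    proof -
      have "- real n * t\<^sup>2 / (2048 * s\<^sup>2) = - m * real n / real k ^ 2"
        unfolding t_def s_def m_def using K kpos by (simp add: power2_eq_square field_simps)
      then show ?thesis unfolding B_def by simp
    qed
    finally show "measure (iid_mvnormal n k D) (bad_event r M n k \<inter> space (iid_mvnormal n k D))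
         \<le> 4 * real k ^ 2 * exp (- m * real n / real k ^ 2)" unfolding Peq by simp
  qed
qed



end
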